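(* Let $G$ be a finitely generated PA (resp. EPA) group and $\mathcal A$ a finite set. Then every $G$-process $(G,\mathcal A,\mu)$ admits a residually finite model (resp. an ergodically residually finite model).
   Context: $G$ acts on $\mathcal A^G$ by $(h.\omega)(g)=\omega(gh)$; a $G$-process $(G,\mathcal A,\mu)$ has $\mu$ a $G$-invariant Borel probability measure. A measure is periodic if it is invariant with finite support, ergodic if invariant sets have measure 0 or 1. $G$ is PA (resp. EPA) if for every finite $\mathcal A$ the periodic (resp. periodic ergodic) measures are weak* dense in the set of invariant probability measures on $\mathcal A^G$. A residually finite approximation of $G$: finite-index normal subgroups $\Gamma_n$ with $\Gamma_{n+1}\le\Gamma_n$, $\bigcap_n\Gamma_n=\{e\}$, $V_n=G/\Gamma_n$ and $\sigma_n^g(v\Gamma_n)=gv\Gamma_n$. For $\rho\in\mathcal A^{V_n}$: $\Pi^{\sigma_n}_v(\rho)=(\rho(\sigma_n^g(v)))_{g\in G}$ and $P_\rho^{\sigma_n}=\frac1{|V_n|}\sum_v\delta_{\Pi_v^{\sigma_n}(\rho)}$. A residually finite model (resp. ergodically residually finite model) for $(G,\mathcal A,\mu)$ is $(V_n,\sigma_n,\mu_n)$ with $(V_n,\sigma_n)$ a residually finite approximation, $\mu_n\in\mathrm{Prob}(\mathcal A^{V_n})$ invariant under the action of the finite group $V_n$ by $(w.\rho)(v)=\rho(vw)$, and such that for every weak* neighbourhood $\mathcal O$ of $\mu$, $|\{v:(\Pi_v^{\sigma_n})_*\mu_n\in\mathcal O\}|/|V_n|\to1$ (resp. additionally $\mu_n(\{\rho:P^{\sigma_n}_\rho\in\mathcal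 O\})\to1$). *)

theory Defs
  imports "HOL-Probability.Probability"
begin

text \<open>Groups are types of class group_add (the group operation is written +, neutral
  element 0; commutativity is NOT assumed).  Alphabets are finite subsets of a type
  carrying the discrete topology; A^G is the set of all functions G \<Rightarrow> A with the
  product topology (the library's topology on function spaces).\<close>

inductive_set gen_subgroup :: "'g::group_add set \<Rightarrow> 'g set" for S where
  gen_zero: "0 \<in> gen_subgroup S"
| gen_base: "s \<in> S \<Longrightarrow> s \<in> gen_subgroup S"
| gen_add: "x \<in> gen_subgroup S \<Longrightarrow> y \<in> gen_subgroup S \<Longrightarrow> x + y \<in> gen_subgroup S"
| gen_uminus: "x \<in> gen_subgroup S \<Longrightarrow> - x \<in> gen_subgroup S"

definition finitely_generated :: "'g::group_add itself \<Rightarrow> bool" where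
  "finitely_generated _ \<longleftrightarrow> (\<exists>S::'g set. finite S \<and> gen_subgroup S = UNIV)"

definition config :: "'a set \<Rightarrow> ('g \<Rightarrow> 'a) set" where
  "config A = {\<omega>. \<forall>g. \<omega> g \<in> A}"

definition shift_space :: "'a::topological_space set \<Rightarrow> ('g \<Rightarrow> 'a) measure" where
  "shift_space A = restrict_space borel (config A)"

definition shift_act :: "'g::group_add \<Rightarrow> ('g \<Rightarrow> 'a) \<Rightarrow> ('g \<Rightarrow> 'a)" where
  "shift_act h \<omega> = (\<lambda>g. \<omega> (g + h))"

definition prob_on :: "'a::topological_space set \<Rightarrow> ('g \<Rightarrow> 'a) measure \<Rightarrow> bool" where
  "prob_on A \<mu> \<longleftrightarrow> prob_space \<mu> \<and> sets \<mu> = sets (shift_space A)"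

definition invariant_measure ::
  "'a::topological_space set \<Rightarrow> ('g::group_add \<Rightarrow> 'a) measure \<Rightarrow> bool" where
  "invariant_measure A \<mu> \<longleftrightarrow> prob_on A \<mu> \<and>
     (\<forall>h. distr \<mu> (shift_space A) (shift_act h) = \<mu>)"

definition periodic_measure ::
  "'a::topological_space set \<Rightarrow> ('g::group_add \<Rightarrow> 'a) measure \<Rightarrow> bool" where
  "periodic_measure A \<mu> \<longleftrightarrow> invariant_measure A \<mu> \<and>
     (\<exists>S. finite S \<and> S \<in> sets \<mu> \<and> measure \<mu> S = 1)"

definition ergodic_measure ::
  "'a::topological_space set \<Rightarrow> ('g::group_add \<Rightarrow> 'a) measure \<Rightarrow> bool" where
  "ergodic_measure A \<mu> \<longleftrightarrow> invariant_measure A \<mu> \<and>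
     (\<forall>X\<in>sets \<mu>. (\<forall>h. shift_act h ` X = X) \<longrightarrow> measure \<mu> X = 0 \<or> measure \<mu> X = 1)"

definition cont_funs :: "'a::topological_space set \<Rightarrow> (('g \<Rightarrow> 'a) \<Rightarrow> real) set" where
  "cont_funs A = {f. continuous_on (config A) f}"

text \<open>Basic weak* neighbourhood of \<mu> determined by a finite set F of continuous
  functions and \<epsilon> > 0; these form a neighbourhood base of the weak* topology.\<close>
definition weak_nbhd ::
  "'a::topological_space set \<Rightarrow> ('g \<Rightarrow> 'a) measure \<Rightarrow> (('g \<Rightarrow> 'a) \<Rightarrow> real) set \<Rightarrow> real
     \<Rightarrow> ('g \<Rightarrow> 'a) measure set" where
  "weak_nbhd A \<mu> F \<epsilon> = {\<nu>. prob_on A \<nu> \<and>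
      (\<forall>f\<in>F. \<bar>(\<integral>\<omega>. f \<omega> \<partial>\<nu>) - (\<integral>\<omega>. f \<omega> \<partial>\<mu>)\<bar> < \<epsilon>)}"

text \<open>Every finite alphabet is in bijection with a finite set of naturals, so
  quantifying over finite A :: nat set covers all finite alphabets.\<close>
definition PA :: "'g::group_add itself \<Rightarrow> bool" where
  "PA _ \<longleftrightarrow> (\<forall>(A::nat set) (\<mu>::('g \<Rightarrow> nat) measure). finite A \<longrightarrow> invariant_measure A \<mu> \<longrightarrow>
     (\<forall>F \<epsilon>. finite F \<longrightarrow> F \<subseteq> cont_funs A \<longrightarrow> \<epsilon> > 0 \<longrightarrow>
        (\<exists>\<nu>. periodic_measure A \<nu> \<and> \<nu> \<in> weak_nbhd A \<mu> F \<epsilon>)))"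

definition EPA :: "'g::group_add itself \<Rightarrow> bool" where
  "EPA _ \<longleftrightarrow> (\<forall>(A::nat set) (\<mu>::('g \<Rightarrow> nat) measure). finite A \<longrightarrow> invariant_measure A \<mu> \<longrightarrow>
     (\<forall>F \<epsilon>. finite F \<longrightarrow> F \<subseteq> cont_funs A \<longrightarrow> \<epsilon> > 0 \<longrightarrow>
        (\<exists>\<nu>. periodic_measure A \<nu> \<and> ergodic_measure A \<nu> \<and> \<nu> \<in> weak_nbhd A \<mu> F \<epsilon>)))"

definition normal_subgroup :: "'g::group_add set \<Rightarrow> bool" where
  "normal_subgroup H \<longleftrightarrow> 0 \<in> H \<and> (\<forall>x\<in>H. \<forall>y\<in>H. x + y \<in> H) \<and> (\<forall>x\<in>H. - x \<in> H)
     \<and> (\<forall>g. \<forall>x\<in>H. g + x - g \<in> H)"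

definition coset :: "'g::group_add \<Rightarrow> 'g set \<Rightarrow> 'g set" where
  "coset v H = (\<lambda>x. v + x) ` H"

definition quot :: "'g::group_add set \<Rightarrow> 'g set set" where
  "quot H = range (\<lambda>v. coset v H)"

text \<open>Product of cosets (equals (vw)\<Gamma> for normal \<Gamma>).\<close>
definition coset_mult :: "'g::group_add set \<Rightarrow> 'g set \<Rightarrow> 'g set" where
  "coset_mult C D = {c + d | c d. c \<in> C \<and> d \<in> D}"

definition sigma :: "'g::group_add \<Rightarrow> 'g set \<Rightarrow> 'g set" where
  "sigma g C = (\<lambda>x. g + x) ` C"

definition rf_approx :: "(nat \<Rightarrow> 'g::group_add set) \<Rightarrow> bool" where
  "rf_approx \<Gamma> \<longleftrightarrow> (\<forall>n. normal_subgroup (\<Gamma> n) \<and> finite (quot (\<Gamma> n)) \<and> \<Gamma> (Suc n) \<subseteq> \<Gamma> n)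
     \<and> (\<Inter>n. \<Gamma> n) = {0}"

definition Pi_v :: "'g::group_add set \<Rightarrow> ('g set \<Rightarrow> 'a) \<Rightarrow> ('g \<Rightarrow> 'a)" where
  "Pi_v v \<rho> = (\<lambda>g. \<rho> (sigma g v))"

definition fin_config_space :: "'g set set \<Rightarrow> 'a set \<Rightarrow> ('g set \<Rightarrow> 'a) measure" where
  "fin_config_space V A = count_space (V \<rightarrow>\<^sub>E A)"

text \<open>P_\<rho> = (1/|V|) \<Sum>_v \<delta>_{\<Pi>_v(\<rho>)}: image of the uniform measure on V under v \<mapsto> \<Pi>_v \<rho>.\<close>
definition empirical :: "'a::topological_space set \<Rightarrow> 'g::group_add set set \<Rightarrow> ('g set \<Rightarrow> 'a)
     \<Rightarrow> ('g \<Rightarrow> 'a) measure" where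
  "empirical A V \<rho> = distr (uniform_count_measure V) (shift_space A) (\<lambda>v. Pi_v v \<rho>)"

definition model_seq :: "'a set \<Rightarrow> (nat \<Rightarrow> 'g::group_add set) \<Rightarrow> (nat \<Rightarrow> ('g set \<Rightarrow> 'a) measure) \<Rightarrow> bool" where
  "model_seq A \<Gamma> \<mu>s \<longleftrightarrow> (\<forall>n. prob_space (\<mu>s n)
      \<and> sets (\<mu>s n) = sets (fin_config_space (quot (\<Gamma> n)) A)
      \<and> (\<forall>w\<in>quot (\<Gamma> n).
           distr (\<mu>s n) (\<mu>s n) (\<lambda>\<rho>. \<lambda>v\<in>quot (\<Gamma> n). \<rho> (coset_mult v w)) = \<mu>s n))"

definition rf_model :: "'a::topological_space set \<Rightarrow> ('g::group_add \<Rightarrow> 'a) measure \<Rightarrow> bool" where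
  "rf_model A \<mu> \<longleftrightarrow> (\<exists>\<Gamma> \<mu>s. rf_approx \<Gamma> \<and> model_seq A \<Gamma> \<mu>s \<and>
     (\<forall>F \<epsilon>. finite F \<longrightarrow> F \<subseteq> cont_funs A \<longrightarrow> \<epsilon> > 0 \<longrightarrow>
        (\<lambda>n. real (card {v \<in> quot (\<Gamma> n).
                distr (\<mu>s n) (shift_space A) (Pi_v v) \<in> weak_nbhd A \<mu> F \<epsilon>})
             / real (card (quot (\<Gamma> n)))) \<longlonglongrightarrow> 1))"

definition erf_model :: "'a::topological_space set \<Rightarrow> ('g::group_add \<Rightarrow> 'a) measure \<Rightarrow> bool" where
  "erf_model A \<mu> \<longleftrightarrow> (\<exists>\<Gamma> \<mu>s. rf_approx \<Gamma> \<and> model_seq A \<Gamma> \<mu>s \<and>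
     (\<forall>F \<epsilon>. finite F \<longrightarrow> F \<subseteq> cont_funs A \<longrightarrow> \<epsilon> > 0 \<longrightarrow>
        (\<lambda>n. real (card {v \<in> quot (\<Gamma> n).
                distr (\<mu>s n) (shift_space A) (Pi_v v) \<in> weak_nbhd A \<mu> F \<epsilon>})
             / real (card (quot (\<Gamma> n)))) \<longlonglongrightarrow> 1
      \<and> (\<lambda>n. measure (\<mu>s n) {\<rho> \<in> space (\<mu>s n).
                empirical A (quot (\<Gamma> n)) \<rho> \<in> weak_nbhd A \<mu> F \<epsilon>}) \<longlonglongrightarrow> 1))"

end

theory Submission
  imports Defs
begin

definition cyl :: "'g set \<Rightarrow> ('g \<Rightarrow> 'a) \<Rightarrow> ('g \<Rightarrow> 'a) set" where
  "cyl J \<omega> = {x. \<forall>j\<in>J. x j = \<omega> j}"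

lemma open_proj: "open ((\<lambda>x::'g\<Rightarrow>'a::discrete_topology. x j) -` S)"
proof -
  have "open S" by (rule discrete_topology_class.open_discrete)
  then show ?thesis
    using continuous_on_open_vimage[of UNIV "\<lambda>x::'g\<Rightarrow>'a. x j", OF open_UNIV] continuous_on_product_coordinates[of j]
    by auto
qed

lemma open_cyl: "finite J \<Longrightarrow> open (cyl J (\<omega>::'g \<Rightarrow> 'a::discrete_topology))"
proof -
  assume "finite J"
  have "cyl J \<omega> = (\<Inter>j\<in>J. (\<lambda>x. x j) -` {\<omega> j})" by (auto simp: cyl_def)
  moreover have "open (\<Inter>j\<in>J. (\<lambda>x::'g \<Rightarrow> 'a. x j) -` {\<omega> j})"
    by (rule open_INT) (use \<open>finite J\<close> open_proj in auto)
  ultimately show ?thesis by simp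
qed

lemma closed_singleton_fun: "closed {\<omega>::'g \<Rightarrow> 'a::discrete_topology}"
proof -
  have "- {\<omega>} = (\<Union>g. (\<lambda>x. x g) -` (- {\<omega> g}))" by auto
  moreover have "open (\<Union>g. (\<lambda>x::'g \<Rightarrow> 'a. x g) -` (- {\<omega> g}))"
    by (rule open_UN) (use open_proj in auto)
  ultimately show ?thesis unfolding closed_def by simp
qed

lemma cont_cyl_fun:
  fixes f :: "('g \<Rightarrow> 'a::discrete_topology) \<Rightarrow> 'b::topological_space"
  assumes "finite J" "\<And>x y. (\<forall>j\<in>J. x j = y j) \<Longrightarrow> f x = f y"
  shows "continuous_on S f"
  unfolding continuous_on_topological
proof (intro ballI allI impI)
  fix x B assume "x \<in> S" "open B" "f x \<in> B"
  show "\<exists>A. open A \<and> x \<in> A \<and> (\<forall>y\<in>S. y \<in> A \<longrightarrow> f y \<in> B)"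
  proof (intro exI conjI)
    show "open (cyl J x)" using open_cyl assms(1) by blast
    show "x \<in> cyl J x" by (simp add: cyl_def)
    show "\<forall>y\<in>S. y \<in> cyl J x \<longrightarrow> f y \<in> B"
    proof (intro ballI impI)
      fix y assume "y \<in> cyl J x"
      then have "f y = f x" using assms(2)[of y x] by (simp add: cyl_def)
      then show "f y \<in> B" using \<open>f x \<in> B\<close> by simp
    qed
  qed
qed

lemma space_shift[simp]: "space (shift_space A) = config A"
  by (simp add: shift_space_def space_restrict_space)

lemma sets_shift_open: "open U \<Longrightarrow> U \<inter> config A \<in> sets (shift_space A)"
  unfolding shift_space_def sets_restrict_space
  by (rule image_eqI[where x=U]) (auto simp: Int_commute borel_open)

lemma sets_shift_closed: "closed U \<Longrightarrow> U \<inter> config A \<in> sets (shift_space A)"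
  unfolding shift_space_def sets_restrict_space
  by (rule image_eqI[where x=U]) (auto simp: Int_commute borel_closed)

lemma sets_shift_singleton: "\<omega> \<in> config A \<Longrightarrow> {\<omega>::'g\<Rightarrow>'a::discrete_topology} \<in> sets (shift_space A)"
  using sets_shift_closed[OF closed_singleton_fun, of \<omega> A] by (simp add: Int_absorb2)

lemma sets_shift_finite: "finite S \<Longrightarrow> S \<subseteq> config A \<Longrightarrow> (S::('g\<Rightarrow>'a::discrete_topology) set) \<in> sets (shift_space A)"
proof (induction S rule: finite_induct)
  case (insert x F)
  have "{x} \<in> sets (shift_space A)" using insert.prems by (intro sets_shift_singleton) auto
  moreover have "F \<in> sets (shift_space A)" using insert.prems insert.IH by auto
  ultimately have "{x} \<union> F \<in> sets (shift_space A)" by (rule sets.Un)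
  then show ?case by simp
qed (auto)

lemma meas_cont: "continuous_on (config A) f \<Longrightarrow> f \<in> borel_measurable (shift_space A)"
  unfolding shift_space_def by (rule borel_measurable_continuous_on_restrict)

lemma meas_cont_shift:
  "continuous_on (config A) T \<Longrightarrow> T ` config A \<subseteq> config B \<Longrightarrow> T \<in> measurable (shift_space A) (shift_space B)"
  unfolding shift_space_def
  by (rule measurable_restrict_space2) (auto intro: borel_measurable_continuous_on_restrict simp: space_restrict_space)

lemma cont_shift_act: "continuous_on S (shift_act h :: ('g::group_add \<Rightarrow> 'a::topological_space) \<Rightarrow> _)"
  unfolding shift_act_def
  by (intro continuous_on_coordinatewise_then_product continuous_on_subset[OF continuous_on_product_coordinates]) auto

lemma shift_act_config: "\<omega> \<in> config A \<Longrightarrow> shift_act h \<omega> \<in> config A"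
  by (simp add: config_def shift_act_def)

lemma meas_shift_act: "shift_act h \<in> measurable (shift_space A) (shift_space (A::'a::topological_space set))"
  by (rule meas_cont_shift[OF cont_shift_act]) (auto intro: shift_act_config)

lemma shift_act_add: "shift_act a (shift_act b \<omega>) = shift_act (a + b) \<omega>"
  by (simp add: shift_act_def add.assoc)

lemma shift_act_0[simp]: "shift_act 0 \<omega> = \<omega>"
  by (simp add: shift_act_def)

section \<open>Cosets\<close>

lemma coset_mem: "x \<in> coset y H \<longleftrightarrow> -y + x \<in> (H::'g::group_add set)"
proof
  assume "x \<in> coset y H"
  then obtain h where "h \<in> H" "x = y + h" by (auto simp: coset_def)
  then show "-y + x \<in> H" by (simp add: add.assoc)
next
  assume "-y + x \<in> H"
  moreover have "x = y + (-y + x)" by (simp add: add.assoc)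
  ultimately show "x \<in> coset y H" unfolding coset_def by blast
qed

lemma normalD:
  assumes "normal_subgroup H"
  shows "0 \<in> H" "x \<in> H \<Longrightarrow> y \<in> H \<Longrightarrow> x + y \<in> H" "x \<in> H \<Longrightarrow> -x \<in> H"
    "x \<in> H \<Longrightarrow> g + x + - g \<in> H"
proof -
  have d: "0 \<in> H" "\<forall>x\<in>H. \<forall>y\<in>H. x + y \<in> H" "\<forall>x\<in>H. - x \<in> H" "\<forall>g. \<forall>x\<in>H. g + x - g \<in> H"
    using assms unfolding normal_subgroup_def by blast+
  show "0 \<in> H" by (rule d(1))
  show "x \<in> H \<Longrightarrow> y \<in> H \<Longrightarrow> x + y \<in> H" using d(2) by blast
  show "x \<in> H \<Longrightarrow> -x \<in> H" using d(3) by blast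
  show "x \<in> H \<Longrightarrow> g + x + - g \<in> H" using d(4) by (metis diff_conv_add_uminus)
qed

lemma coset_self: "normal_subgroup H \<Longrightarrow> y \<in> coset y H"
  by (simp add: coset_mem normalD)

lemma coset_eq:
  assumes H: "normal_subgroup H"
  shows "coset y H = coset z H \<longleftrightarrow> -y + z \<in> H"
proof
  assume "coset y H = coset z H"
  then have "z \<in> coset y H" using coset_self[OF H, of z] by simp
  then show "-y + z \<in> H" by (simp add: coset_mem)
next
  assume a: "-y + z \<in> H"
  show "coset y H = coset z H"
  proof (rule set_eqI)
    fix x
    have e1: "-y + x = (-y + z) + (-z + x)" by (simp add: add.assoc)
    have e2: "-z + x = - (-y + z) + (-y + x)" by (simp add: add.assoc minus_add diff_conv_add_uminus)
    show "x \<in> coset y H \<longleftrightarrow> x \<in> coset z H"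
      unfolding coset_mem using a normalD[OF H] e1 e2 by metis
  qed
qed

definition rep :: "'g set \<Rightarrow> 'g" where "rep C = (SOME x. x \<in> C)"

lemma rep_in: "x \<in> C \<Longrightarrow> rep C \<in> C"
  unfolding rep_def by (rule someI)

lemma rep_coset: "normal_subgroup H \<Longrightarrow> -y + rep (coset y H) \<in> H"
  using rep_in[OF coset_self] coset_mem by blast

lemma quot_rep: assumes H: "normal_subgroup H" and v: "v \<in> quot H" shows "v = coset (rep v) H"
proof -
  obtain y where y: "v = coset y H" using v unfolding quot_def by blast
  have "-y + rep (coset y H) \<in> H" by (rule rep_coset[OF H])
  then have "coset y H = coset (rep (coset y H)) H" using coset_eq[OF H] by blast
  then show ?thesis using y by simp
qed

lemma quot_nonempty: "quot H \<noteq> {}"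
  unfolding quot_def by simp

lemma sigma_coset: "sigma g (coset y H) = coset (g + y) (H::'g::group_add set)"
  unfolding sigma_def coset_def by (auto simp: image_image add.assoc)

lemma sigma_quot: "v \<in> quot H \<Longrightarrow> sigma g v \<in> quot H"
  unfolding quot_def by (auto simp: sigma_coset)

lemma coset_mult_coset:
  assumes H: "normal_subgroup H"
  shows "coset_mult (coset a H) (coset b H) = coset (a + b) H"
proof (rule set_eqI)
  fix z
  show "z \<in> coset_mult (coset a H) (coset b H) \<longleftrightarrow> z \<in> coset (a + b) H"
  proof
    assume "z \<in> coset_mult (coset a H) (coset b H)"
    then obtain c d where cd: "c \<in> coset a H" "d \<in> coset b H" "z = c + d"
      unfolding coset_mult_def by blast
    from cd(1) obtain x where x: "x \<in> H" "c = a + x" unfolding coset_def by (rule imageE) simp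
    from cd(2) obtain y where y: "y \<in> H" "d = b + y" unfolding coset_def by (rule imageE) simp
    have xy: "x \<in> H" "y \<in> H" "z = (a + x) + (b + y)" using x y cd(3) by simp_all
    have "-(a + b) + z = (-b + x + - (-b)) + y"
      using xy by (simp add: add.assoc minus_add diff_conv_add_uminus del: add_uminus_conv_diff)
    also have "\<dots> \<in> H" using normalD(2)[OF H normalD(4)[OF H xy(1)] xy(2)] .
    finally show "z \<in> coset (a + b) H" by (simp add: coset_mem)
  next
    assume "z \<in> coset (a + b) H"
    then have h: "-(a+b) + z \<in> H" by (simp add: coset_mem)
    have e: "z = a + (b + (-(a+b) + z))" by (simp add: add.assoc minus_add diff_conv_add_uminus del: add_uminus_conv_diff)
    have c: "a \<in> coset a H" by (rule coset_self[OF H])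
    have d: "b + (-(a+b) + z) \<in> coset b H" using h by (simp add: coset_mem)
    show "z \<in> coset_mult (coset a H) (coset b H)"
      unfolding coset_mult_def using c d e by blast
  qed
qed

lemma coset_mult_quot: assumes H: "normal_subgroup H" and "v \<in> quot H" "w \<in> quot H"
  shows "coset_mult v w = coset (rep v + rep w) H"
proof -
  have e1: "v = coset (rep v) H" and e2: "w = coset (rep w) H" using quot_rep[OF H] assms by auto
  have "coset_mult v w = coset_mult (coset (rep v) H) (coset (rep w) H)"
    using e1 e2 by (rule arg_cong2)
  also have "\<dots> = coset (rep v + rep w) H" by (rule coset_mult_coset[OF H])
  finally show ?thesis .
qed

lemma normal_Int: assumes H: "normal_subgroup H" and K: "normal_subgroup K" shows "normal_subgroup (H \<inter> K)"
  unfolding normal_subgroup_def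
proof (intro conjI ballI allI)
  show "0 \<in> H \<inter> K" using normalD(1)[OF H] normalD(1)[OF K] by blast
  fix x y assume "x \<in> H \<inter> K" "y \<in> H \<inter> K"
  then show "x + y \<in> H \<inter> K" using normalD(2)[OF H, of x y] normalD(2)[OF K, of x y] by blast
next
  fix x assume "x \<in> H \<inter> K"
  then show "- x \<in> H \<inter> K" using normalD(3)[OF H, of x] normalD(3)[OF K, of x] by blast
next
  fix g x assume "x \<in> H \<inter> K"
  then show "g + x - g \<in> H \<inter> K" using normalD(4)[OF H, of x g] normalD(4)[OF K, of x g]
    by (simp add: diff_conv_add_uminus del: add_uminus_conv_diff)
qed

lemma coset_Int: "coset v (H \<inter> K) = coset v H \<inter> coset v K"
  by (auto simp: coset_mem)

lemma finite_quot_Int: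
  assumes "finite (quot H)" "finite (quot K)"
  shows "finite (quot (H \<inter> K))"
proof -
  have "quot (H \<inter> K) \<subseteq> (\<lambda>(C, D). C \<inter> D) ` (quot H \<times> quot K)"
    unfolding quot_def coset_Int by auto
  then show ?thesis using assms by (auto intro: finite_subset)
qed

definition fixH :: "'g::group_add set \<Rightarrow> ('g \<Rightarrow> 'a) \<Rightarrow> bool" where
  "fixH H \<omega> \<longleftrightarrow> (\<forall>h\<in>H. shift_act h \<omega> = \<omega>)"

lemma fixH_apply: "fixH H \<omega> \<Longrightarrow> h \<in> H \<Longrightarrow> \<omega> (x + h) = \<omega> x"
  unfolding fixH_def shift_act_def by (metis)

lemma fix_rep: assumes "normal_subgroup H" "fixH H \<omega>" shows "\<omega> (rep (coset y H)) = \<omega> y"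
proof -
  have "rep (coset y H) = y + (-y + rep (coset y H))" by (simp add: add.assoc)
  then have "\<omega> (rep (coset y H)) = \<omega> (y + (-y + rep (coset y H)))" by simp
  also have "\<dots> = \<omega> y" using fixH_apply[OF assms(2) rep_coset[OF assms(1)]] .
  finally show ?thesis .
qed

lemma fixH_mono: "K \<subseteq> H \<Longrightarrow> fixH H \<omega> \<Longrightarrow> fixH K \<omega>"
  unfolding fixH_def by auto

section \<open>Stabilizer of a finite invariant set\<close>

definition stab :: "('g::group_add \<Rightarrow> 'a) set \<Rightarrow> 'g set" where
  "stab Ob = {h. \<forall>\<omega>\<in>Ob. shift_act h \<omega> = \<omega>}"

lemma stab_normal:
  assumes inv: "\<And>h \<omega>. \<omega> \<in> Ob \<Longrightarrow> shift_act h \<omega> \<in> Ob"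
  shows "normal_subgroup (stab Ob)"
  unfolding normal_subgroup_def stab_def
proof (intro conjI ballI allI; clarsimp)
  fix x \<omega> assume x: "\<forall>\<omega>\<in>Ob. shift_act x \<omega> = \<omega>" and "\<omega> \<in> Ob"
  then show "shift_act (- x) \<omega> = \<omega>"
    by (metis shift_act_add add.left_inverse shift_act_0)
next
  fix x y \<omega> assume "\<forall>\<omega>\<in>Ob. shift_act x \<omega> = \<omega>" "\<forall>\<omega>\<in>Ob. shift_act y \<omega> = \<omega>" "\<omega> \<in> Ob"
  then show "shift_act (x + y) \<omega> = \<omega>" by (metis shift_act_add)
next
  fix g x \<omega> assume x: "\<forall>\<omega>\<in>Ob. shift_act x \<omega> = \<omega>" and "\<omega> \<in> Ob"
  then have "shift_act (-g) \<omega> \<in> Ob" using inv by blast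
  then have "shift_act (g + x - g) \<omega> = shift_act g (shift_act x (shift_act (-g) \<omega>))"
    by (simp add: shift_act_add diff_conv_add_uminus add.assoc del: add_uminus_conv_diff)
  also have "\<dots> = shift_act g (shift_act (-g) \<omega>)" using x \<open>shift_act (-g) \<omega> \<in> Ob\<close> by simp
  also have "\<dots> = \<omega>" by (simp only: shift_act_add add.right_inverse shift_act_0)
  finally show "shift_act (g + x - g) \<omega> = \<omega>" .
qed

lemma stab_finite_quot:
  fixes Ob :: "('g::group_add \<Rightarrow> 'a) set"
  assumes inv: "\<And>h \<omega>. \<omega> \<in> Ob \<Longrightarrow> shift_act h \<omega> \<in> Ob" and fin: "finite Ob"
  shows "finite (quot (stab Ob))"
proof -
  define Z where "Z p = {x::'g. \<forall>\<omega>\<in>Ob. shift_act x \<omega> = p \<omega>}" for p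
  have "coset v (stab Ob) = Z (\<lambda>\<omega>\<in>Ob. shift_act v \<omega>)" for v
  proof (rule set_eqI)
    fix x
    have "(-v + x \<in> stab Ob) \<longleftrightarrow> (\<forall>\<omega>\<in>Ob. shift_act x \<omega> = shift_act v \<omega>)"
    proof -
      have "shift_act (-v + x) \<omega> = \<omega> \<longleftrightarrow> shift_act x \<omega> = shift_act v \<omega>" for \<omega>
      proof
        assume "shift_act (-v + x) \<omega> = \<omega>"
        then have "shift_act v (shift_act (-v + x) \<omega>) = shift_act v \<omega>" by simp
        then show "shift_act x \<omega> = shift_act v \<omega>" by (simp add: shift_act_add add.assoc[symmetric])
      next
        assume "shift_act x \<omega> = shift_act v \<omega>"
        then have "shift_act (-v) (shift_act x \<omega>) = shift_act (-v) (shift_act v \<omega>)" by simp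
        then show "shift_act (-v + x) \<omega> = \<omega>" by (simp add: shift_act_add)
      qed
      then show ?thesis unfolding stab_def by auto
    qed
    then show "x \<in> coset v (stab Ob) \<longleftrightarrow> x \<in> Z (\<lambda>\<omega>\<in>Ob. shift_act v \<omega>)"
      by (simp add: coset_mem Z_def)
  qed
  then have "quot (stab Ob) \<subseteq> Z ` (Ob \<rightarrow>\<^sub>E Ob)"
    unfolding quot_def using inv by (auto intro!: imageI)
  moreover have "finite (Z ` (Ob \<rightarrow>\<^sub>E Ob))" using fin by (intro finite_imageI finite_PiE) auto
  ultimately show ?thesis by (rule finite_subset)
qed

lemma stab_fix: "\<omega> \<in> Ob \<Longrightarrow> fixH (stab Ob) \<omega>"
  unfolding stab_def fixH_def by auto

lemma prob_onD:
  assumes "prob_on A \<nu>"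
  shows "prob_space \<nu>" "sets \<nu> = sets (shift_space A)" "space \<nu> = config A"
proof -
  show "prob_space \<nu>" "sets \<nu> = sets (shift_space A)" using assms unfolding prob_on_def by auto
  then show "space \<nu> = config A" using sets_eq_imp_space_eq by (metis space_shift)
qed

lemma invD: assumes "invariant_measure A \<nu>"
  shows "prob_on A \<nu>" "distr \<nu> (shift_space A) (shift_act h) = \<nu>"
  using assms unfolding invariant_measure_def by auto

lemma meas_shift_nu: "prob_on A \<nu> \<Longrightarrow> shift_act h \<in> measurable \<nu> (shift_space A)"
  using meas_shift_act measurable_cong_sets[OF prob_onD(2) refl] by metis

lemma borel_nu: "prob_on A \<nu> \<Longrightarrow> f \<in> borel_measurable (shift_space A) \<Longrightarrow> f \<in> borel_measurable \<nu>"
  using measurable_cong_sets[OF prob_onD(2) refl] by metis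

lemma inv_measure:
  assumes "invariant_measure A \<nu>" "X \<in> sets (shift_space A)"
  shows "measure \<nu> X = measure \<nu> (shift_act h -` X \<inter> config A)"
proof -
  have P: "prob_on A \<nu>" using invD(1)[OF assms(1)] .
  have "measure \<nu> X = measure (distr \<nu> (shift_space A) (shift_act h)) X"
    using invD(2)[OF assms(1)] by simp
  also have "\<dots> = measure \<nu> (shift_act h -` X \<inter> space \<nu>)"
    by (rule measure_distr[OF meas_shift_nu[OF P] assms(2)])
  finally show ?thesis using prob_onD(3)[OF P] by simp
qed

lemma shift_inv: "shift_act h (shift_act (-h) x) = x" "shift_act (-h) (shift_act h x) = x"
  by (simp_all add: shift_act_add)

lemma vimage_shift_singleton:
  "\<omega> \<in> config A \<Longrightarrow> shift_act (-h) -` {\<omega>} \<inter> config A = {shift_act h \<omega>}"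
proof (rule set_eqI)
  fix x assume w: "\<omega> \<in> config A"
  show "x \<in> shift_act (-h) -` {\<omega>} \<inter> config A \<longleftrightarrow> x \<in> {shift_act h \<omega>}"
  proof
    assume "x \<in> shift_act (-h) -` {\<omega>} \<inter> config A"
    then have "shift_act (-h) x = \<omega>" by simp
    then have "shift_act h (shift_act (-h) x) = shift_act h \<omega>" by simp
    then show "x \<in> {shift_act h \<omega>}" using shift_inv(1)[of h x] by simp
  next
    assume "x \<in> {shift_act h \<omega>}"
    then show "x \<in> shift_act (-h) -` {\<omega>} \<inter> config A"
      using shift_inv(2)[of h \<omega>] shift_act_config[OF w] by simp
  qed
qed

lemma singleton_shift_measure:
  fixes \<nu> :: "('g::group_add \<Rightarrow> 'a::discrete_topology) measure"
  assumes "invariant_measure A \<nu>" "\<omega> \<in> config A"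
  shows "measure \<nu> {shift_act h \<omega>} = measure \<nu> {\<omega>}"
  using inv_measure[OF assms(1) sets_shift_singleton[OF assms(2)], of "-h"]
    vimage_shift_singleton[OF assms(2), of h] by simp

lemma integral_fin_supp:
  fixes \<nu> :: "('g \<Rightarrow> 'a::discrete_topology) measure"
  assumes P: "prob_on A \<nu>" and fin: "finite Ob" "Ob \<subseteq> config A" "measure \<nu> Ob = 1"
    and f: "f \<in> borel_measurable (shift_space A)"
  shows "integrable \<nu> f" "integral\<^sup>L \<nu> f = (\<Sum>\<omega>\<in>Ob. f \<omega> * measure \<nu> {\<omega>})"
proof -
  interpret prob_space \<nu> using prob_onD(1)[OF P] .
  have sets: "sets \<nu> = sets (shift_space A)" by (rule prob_onD(2)[OF P])
  have f': "f \<in> borel_measurable \<nu>" by (rule borel_nu[OF P f])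
  have Ob_sets: "Ob \<in> sets \<nu>" using sets_shift_finite[OF fin(1,2)] sets by simp
  have sing: "{\<omega>} \<in> sets \<nu>" if "\<omega> \<in> Ob" for \<omega>
    using sets_shift_singleton[of \<omega> A] fin(2) that sets by auto
  have AE: "AE x in \<nu>. x \<in> Ob" using AE_in_set_eq_1[OF Ob_sets] fin(3) by simp
  define g where "g x = (\<Sum>\<omega>\<in>Ob. f \<omega> * indicator {\<omega>} x)" for x
  have gi: "(\<lambda>x. f \<omega> * indicator {\<omega>} x) \<in> borel_measurable \<nu>" if "\<omega> \<in> Ob" for \<omega>
    using borel_measurable_indicator[OF sing[OF that]] by (intro borel_measurable_times borel_measurable_const) auto
  have g_meas: "g \<in> borel_measurable \<nu>"
    unfolding g_def by (rule borel_measurable_sum) (use gi in auto)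
  have g_eq: "g x = f x" if "x \<in> Ob" for x
  proof -
    have "g x = (\<Sum>\<omega>\<in>Ob. if \<omega> = x then f \<omega> else 0)"
      unfolding g_def by (rule sum.cong) (auto simp: indicator_def)
    also have "\<dots> = f x" using fin(1) that by (simp add: sum.delta)
    finally show ?thesis .
  qed
  have eq: "AE x in \<nu>. f x = g x" using AE by eventually_elim (simp add: g_eq)
  have gint: "integrable \<nu> (\<lambda>x. f \<omega> * indicator {\<omega>} x)" if "\<omega> \<in> Ob" for \<omega>
    by (rule integrable_mult_right) (rule integrable_real_indicator[OF sing[OF that]], simp add: less_top[symmetric])
  have "integrable \<nu> g" unfolding g_def by (rule Bochner_Integration.integrable_sum[where I=Ob and f="\<lambda>\<omega> x. f \<omega> * indicator {\<omega>} x"]) (rule gint)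
  then show "integrable \<nu> f" using integrable_cong_AE[OF f' g_meas eq] by simp
  have "integral\<^sup>L \<nu> f = integral\<^sup>L \<nu> g" by (rule integral_cong_AE[OF f' g_meas eq])
  also have "\<dots> = (\<Sum>\<omega>\<in>Ob. integral\<^sup>L \<nu> (\<lambda>x. f \<omega> * indicator {\<omega>} x))"
    unfolding g_def by (rule Bochner_Integration.integral_sum[where I=Ob and f="\<lambda>\<omega> x. f \<omega> * indicator {\<omega>} x"]) (rule gint)
  also have "\<dots> = (\<Sum>\<omega>\<in>Ob. f \<omega> * measure \<nu> {\<omega>})"
  proof (rule sum.cong[OF refl])
    fix \<omega> assume "\<omega> \<in> Ob"
    then have "{\<omega>} \<inter> space \<nu> = {\<omega>}" using fin(2) prob_onD(3)[OF P] by auto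
    then show "integral\<^sup>L \<nu> (\<lambda>x. f \<omega> * indicator {\<omega>} x) = f \<omega> * measure \<nu> {\<omega>}"
      by simp
  qed
  finally show "integral\<^sup>L \<nu> f = (\<Sum>\<omega>\<in>Ob. f \<omega> * measure \<nu> {\<omega>})" .
qed

lemma periodic_struct:
  fixes \<nu> :: "('g::group_add \<Rightarrow> 'a::discrete_topology) measure"
  assumes "periodic_measure A \<nu>"
  shows "\<exists>Ob. finite Ob \<and> Ob \<subseteq> config A \<and> (\<forall>h \<omega>. \<omega> \<in> Ob \<longrightarrow> shift_act h \<omega> \<in> Ob)
     \<and> measure \<nu> Ob = 1 \<and> (\<forall>\<omega>\<in>Ob. measure \<nu> {\<omega>} > 0)"
proof -
  have I: "invariant_measure A \<nu>" using assms by (simp add: periodic_measure_def)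
  have P: "prob_on A \<nu>" by (rule invD(1)[OF I])
  interpret prob_space \<nu> using prob_onD(1)[OF P] .
  have sets: "sets \<nu> = sets (shift_space A)" by (rule prob_onD(2)[OF P])
  obtain S where S: "finite S" "S \<in> sets \<nu>" "measure \<nu> S = 1"
    using assms unfolding periodic_measure_def by blast
  have Ssub: "S \<subseteq> config A" using sets.sets_into_space[OF S(2)] prob_onD(3)[OF P] by simp
  have sing: "{\<omega>} \<in> sets \<nu>" if "\<omega> \<in> config A" for \<omega>
    using sets_shift_singleton[OF that] sets by simp
  have out0: "measure \<nu> {x} = 0" if "x \<in> config A" "x \<notin> S" for x
  proof -
    have "measure \<nu> ({x} \<union> S) = measure \<nu> {x} + measure \<nu> S"
      using that by (intro finite_measure_Union sing S(2)) auto
    moreover have "measure \<nu> ({x} \<union> S) \<le> 1" by (rule prob_le_1)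
    ultimately show ?thesis using S(3) measure_nonneg[of \<nu> "{x}"] by simp
  qed
  define Ob where "Ob = {\<omega>\<in>S. measure \<nu> {\<omega>} > 0}"
  have finO: "finite Ob" using S(1) unfolding Ob_def by simp
  have ObS: "Ob \<subseteq> S" unfolding Ob_def by auto
  have "measure \<nu> S = (\<Sum>\<omega>\<in>S. measure \<nu> {\<omega>})"
    using S(1) Ssub sing by (intro measure_eq_sum_singleton) auto
  also have "\<dots> = (\<Sum>\<omega>\<in>Ob. measure \<nu> {\<omega>})"
    using S(1) ObS by (intro sum.mono_neutral_right) (auto simp: Ob_def less_le)
  also have "\<dots> = measure \<nu> Ob"
    using finO ObS Ssub sing by (intro measure_eq_sum_singleton[symmetric]) auto
  finally have mO: "measure \<nu> Ob = 1" using S(3) by simp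
  have invO: "shift_act h \<omega> \<in> Ob" if "\<omega> \<in> Ob" for h \<omega>
  proof -
    have w: "\<omega> \<in> config A" using that ObS Ssub by auto
    have m: "measure \<nu> {shift_act h \<omega>} = measure \<nu> {\<omega>}" by (rule singleton_shift_measure[OF I w])
    have pos: "measure \<nu> {shift_act h \<omega>} > 0" using m that by (simp add: Ob_def)
    have "shift_act h \<omega> \<in> S" using out0[OF shift_act_config[OF w], of h] pos by (cases "shift_act h \<omega> \<in> S") auto
    then show ?thesis using pos by (simp add: Ob_def)
  qed
  show ?thesis
    by (rule exI[of _ Ob]) (use finO ObS Ssub mO invO in \<open>auto simp: Ob_def\<close>)
qed

definition Phi :: "'g::group_add set \<Rightarrow> ('g \<Rightarrow> 'a) \<Rightarrow> ('g set \<Rightarrow> 'a)" where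
  "Phi H \<omega> = (\<lambda>v\<in>quot H. \<omega> (rep v))"

lemma Phi_space: "\<omega> \<in> config A \<Longrightarrow> Phi H \<omega> \<in> quot H \<rightarrow>\<^sub>E A"
  by (auto simp: Phi_def config_def)

lemma Phi_eq_iff: "a \<in> quot H \<rightarrow>\<^sub>E A \<Longrightarrow> Phi H x = a \<longleftrightarrow> (\<forall>v\<in>quot H. x (rep v) = a v)"
  unfolding Phi_def by (auto simp: fun_eq_iff PiE_def extensional_def)

lemma Phi_meas:
  fixes A :: "'a::discrete_topology set" and H :: "'g::group_add set"
  assumes "finite (quot H)" "finite A"
  shows "(Phi H :: ('g \<Rightarrow> 'a) \<Rightarrow> _) \<in> measurable (shift_space A) (fin_config_space (quot H) A)"
proof -
  have fin: "finite (quot H \<rightarrow>\<^sub>E A)" using assms by (intro finite_PiE) auto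
  show ?thesis unfolding fin_config_space_def
  proof (subst measurable_count_space_eq2[OF fin], intro conjI ballI)
    show "Phi H \<in> space (shift_space A) \<rightarrow> quot H \<rightarrow>\<^sub>E A" using Phi_space by (metis Pi_I space_shift)
    fix a assume a: "a \<in> quot H \<rightarrow>\<^sub>E A"
    have e: "Phi H -` {a} \<inter> space (shift_space A) = (\<Inter>v\<in>quot H. (\<lambda>x::'g\<Rightarrow>'a. x (rep v)) -` {a v}) \<inter> config A"
      using Phi_eq_iff[OF a] by auto
    have "\<forall>v\<in>quot H. open ((\<lambda>x::'g\<Rightarrow>'a. x (rep v)) -` {a v})" by (intro ballI open_proj)
    then have "open (\<Inter>v\<in>quot H. (\<lambda>x::'g\<Rightarrow>'a. x (rep v)) -` {a v})"
      by (intro open_INT assms(1))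
    then show "Phi H -` {a} \<inter> space (shift_space A) \<in> sets (shift_space A)"
      unfolding e by (rule sets_shift_open)
  qed
qed

lemma shift_rep:
  assumes H: "normal_subgroup H" and x: "fixH H x"
  shows "shift_act (rep (coset y H)) x = shift_act y x"
proof -
  have "rep (coset y H) = y + (-y + rep (coset y H))" by (simp add: add.assoc)
  then have "shift_act (rep (coset y H)) x = shift_act y (shift_act (-y + rep (coset y H)) x)"
    by (metis shift_act_add)
  also have "\<dots> = shift_act y x" using x rep_coset[OF H, of y] by (simp add: fixH_def)
  finally show ?thesis .
qed

lemma Pi_Phi:
  assumes H: "normal_subgroup H" and v: "v \<in> quot H" and x: "fixH H x"
  shows "Pi_v v (Phi H x) = shift_act (rep v) x"
proof (rule ext)
  fix g
  have sq: "sigma g v \<in> quot H" by (rule sigma_quot[OF v])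
  have "sigma g v = coset (g + rep v) H"
    using quot_rep[OF H v] sigma_coset by metis
  then have "Pi_v v (Phi H x) g = x (rep (coset (g + rep v) H))"
    using sq by (simp add: Pi_v_def Phi_def)
  also have "\<dots> = x (g + rep v)" by (rule fix_rep[OF H x])
  finally show "Pi_v v (Phi H x) g = shift_act (rep v) x g" by (simp add: shift_act_def)
qed

lemma Pi_v_space: "v \<in> quot H \<Longrightarrow> \<rho> \<in> quot H \<rightarrow>\<^sub>E A \<Longrightarrow> Pi_v v \<rho> \<in> config A"
  unfolding Pi_v_def config_def using sigma_quot by (auto simp: PiE_iff)

lemma Pi_v_meas:
  assumes "v \<in> quot H" "sets M = sets (fin_config_space (quot H) A)"
  shows "Pi_v v \<in> measurable M (shift_space A)"
proof -
  have "Pi_v v \<in> measurable (fin_config_space (quot H) A) (shift_space A)"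
    unfolding fin_config_space_def using Pi_v_space[OF assms(1)] by auto
  then show ?thesis using measurable_cong_sets[OF assms(2) refl] by metis
qed

locale model_setup =
  fixes H :: "'g::group_add set" and A :: "'a::discrete_topology set" and \<nu> and Ob
  assumes H: "normal_subgroup H" and finq: "finite (quot H)" and finA: "finite A"
    and I: "invariant_measure A \<nu>"
    and finO: "finite Ob" and Osub: "Ob \<subseteq> config A" and mO: "measure \<nu> Ob = 1"
    and fixO: "\<And>x. x \<in> Ob \<Longrightarrow> fixH H x"
begin

abbreviation "M \<equiv> distr \<nu> (fin_config_space (quot H) A) (Phi H)"

lemma P: "prob_on A \<nu>" by (rule invD(1)[OF I])

lemma PhiM: "Phi H \<in> measurable \<nu> (fin_config_space (quot H) A)"
  using Phi_meas[OF finq finA] measurable_cong_sets[OF prob_onD(2)[OF P] refl] by metis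

lemma sets_M: "sets M = sets (fin_config_space (quot H) A)" by simp

lemma space_M: "space M = quot H \<rightarrow>\<^sub>E A" by (simp add: fin_config_space_def)

lemma prob_M: "prob_space M"
  using prob_space.prob_space_distr[OF prob_onD(1)[OF P] PhiM] .

lemma integral_shift:
  fixes f :: "('g \<Rightarrow> 'a) \<Rightarrow> real"
  assumes f: "f \<in> borel_measurable (shift_space A)"
  shows "integral\<^sup>L \<nu> (\<lambda>x. f (shift_act h x)) = integral\<^sup>L \<nu> f"
proof -
  have "integral\<^sup>L \<nu> f = integral\<^sup>L (distr \<nu> (shift_space A) (shift_act h)) f"
    using invD(2)[OF I, of h] by simp
  also have "\<dots> = integral\<^sup>L \<nu> (\<lambda>x. f (shift_act h x))"
    by (rule integral_distr[OF meas_shift_nu[OF P] f])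
  finally show ?thesis by simp
qed

lemma model_integral:
  fixes f :: "('g \<Rightarrow> 'a) \<Rightarrow> real"
  assumes v: "v \<in> quot H" and f: "f \<in> borel_measurable (shift_space A)"
  shows "integral\<^sup>L (distr M (shift_space A) (Pi_v v)) f = integral\<^sup>L \<nu> f"
proof -
  have PiM: "Pi_v v \<in> measurable M (shift_space A)" by (rule Pi_v_meas[OF v sets_M])
  have fPi: "(\<lambda>\<rho>. f (Pi_v v \<rho>)) \<in> borel_measurable (fin_config_space (quot H) A)"
    unfolding fin_config_space_def by simp
  have fPiPhi: "(\<lambda>x. f (Pi_v v (Phi H x))) \<in> borel_measurable (shift_space A)"
    using measurable_comp[OF Phi_meas[OF finq finA] fPi] by (simp add: comp_def)
  have fsh: "(\<lambda>x. f (shift_act (rep v) x)) \<in> borel_measurable (shift_space A)"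
    using measurable_comp[OF meas_shift_act f] by (simp add: comp_def)
  have "integral\<^sup>L (distr M (shift_space A) (Pi_v v)) f = integral\<^sup>L M (\<lambda>\<rho>. f (Pi_v v \<rho>))"
    by (rule integral_distr[OF PiM f])
  also have "\<dots> = integral\<^sup>L \<nu> (\<lambda>x. f (Pi_v v (Phi H x)))"
    by (rule integral_distr[OF PhiM fPi])
  also have "\<dots> = (\<Sum>x\<in>Ob. f (Pi_v v (Phi H x)) * measure \<nu> {x})"
    by (rule integral_fin_supp(2)[OF P finO Osub mO fPiPhi])
  also have "\<dots> = (\<Sum>x\<in>Ob. f (shift_act (rep v) x) * measure \<nu> {x})"
    using Pi_Phi[OF H v fixO] by simp
  also have "\<dots> = integral\<^sup>L \<nu> (\<lambda>x. f (shift_act (rep v) x))"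
    by (rule integral_fin_supp(2)[OF P finO Osub mO fsh, symmetric])
  also have "\<dots> = integral\<^sup>L \<nu> f" by (rule integral_shift[OF f])
  finally show ?thesis .
qed

lemma model_prob_on:
  assumes v: "v \<in> quot H"
  shows "prob_on A (distr M (shift_space A) (Pi_v v))"
  unfolding prob_on_def
  using prob_space.prob_space_distr[OF prob_M Pi_v_meas[OF v sets_M]] by simp

lemma model_inv:
  assumes w: "w \<in> quot H"
  shows "distr M M (\<lambda>\<rho>. \<lambda>v\<in>quot H. \<rho> (coset_mult v w)) = M"
proof -
  define Psi where "Psi = (\<lambda>\<rho>::'g set \<Rightarrow> 'a. \<lambda>v\<in>quot H. \<rho> (coset_mult v w))"
  have cq: "coset_mult v w \<in> quot H" if "v \<in> quot H" for v
    using coset_mult_quot[OF H that w] unfolding quot_def by simp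
  have PsiM: "Psi \<in> measurable M M"
    using cq by (auto simp: Psi_def space_M fin_config_space_def PiE_iff)
  have PsiM0: "Psi \<in> measurable (fin_config_space (quot H) A) M"
    using PsiM measurable_cong_sets[OF sets_M refl] by metis
  have shM: "shift_act (rep w) \<in> measurable \<nu> (shift_space A)" by (rule meas_shift_nu[OF P])
  have PhiM': "Phi H \<in> measurable (shift_space A) M"
    using Phi_meas[OF finq finA] measurable_cong_sets[OF refl sets_M] by metis
  have PhiM'': "Phi H \<in> measurable \<nu> M"
    using PhiM measurable_cong_sets[OF refl sets_M] by metis
  have comp: "(Psi \<circ> Phi H) x = (Phi H \<circ> shift_act (rep w)) x" if "x \<in> Ob" for x
  proof (rule ext)
    fix v
    show "(Psi \<circ> Phi H) x v = (Phi H \<circ> shift_act (rep w)) x v"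
    proof (cases "v \<in> quot H")
      case True
      have "(Psi \<circ> Phi H) x v = x (rep (coset_mult v w))"
        using True cq[OF True] by (simp add: Psi_def Phi_def)
      also have "\<dots> = x (rep (coset (rep v + rep w) H))" using coset_mult_quot[OF H True w] by simp
      also have "\<dots> = x (rep v + rep w)" by (rule fix_rep[OF H fixO[OF that]])
      finally show ?thesis using True by (simp add: Phi_def shift_act_def)
    next
      case False
      then show ?thesis by (simp add: Psi_def Phi_def)
    qed
  qed
  have AE: "AE x in \<nu>. (Psi \<circ> Phi H) x = (Phi H \<circ> shift_act (rep w)) x"
  proof -
    interpret prob_space \<nu> using prob_onD(1)[OF P] .
    have "Ob \<in> sets \<nu>" using sets_shift_finite[OF finO Osub] prob_onD(2)[OF P] by simp
    then have "AE x in \<nu>. x \<in> Ob" using AE_in_set_eq_1 mO by simp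
    then show ?thesis by eventually_elim (rule comp)
  qed
  have "distr M M Psi = distr \<nu> M (Psi \<circ> Phi H)"
    by (rule distr_distr[OF PsiM0 PhiM])
  also have "\<dots> = distr \<nu> M (Phi H \<circ> shift_act (rep w))"
    by (rule distr_cong_AE[OF refl refl AE]) (use PsiM PhiM'' shM PhiM' in \<open>auto intro: measurable_comp\<close>)
  also have "\<dots> = distr (distr \<nu> (shift_space A) (shift_act (rep w))) M (Phi H)"
    by (rule distr_distr[OF PhiM' shM, symmetric])
  also have "\<dots> = distr \<nu> M (Phi H)" using invD(2)[OF I] by simp
  also have "\<dots> = M" by (rule distr_cong) auto
  finally show ?thesis unfolding Psi_def .
qed

end

context model_setup
begin

lemma coset_shift_inj:
  assumes u: "u \<in> quot H" and v: "v \<in> quot H" and e: "coset (rep u + h) H = coset (rep v + h) H"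
  shows "u = v"
proof -
  have "-(rep u + h) + (rep v + h) \<in> H" using e coset_eq[OF H] by blast
  then have z: "-h + (-rep u + rep v) + h \<in> H" by (simp add: minus_add add.assoc diff_conv_add_uminus del: add_uminus_conv_diff)
  have "h + (-h + (-rep u + rep v) + h) + - h \<in> H" by (rule normalD(4)[OF H z])
  then have "-rep u + rep v \<in> H" by (simp add: add.assoc diff_conv_add_uminus del: add_uminus_conv_diff)
  then have "coset (rep u) H = coset (rep v) H" using coset_eq[OF H] by blast
  then show ?thesis using quot_rep[OF H u] quot_rep[OF H v] by simp
qed

lemma avg_shift:
  fixes f :: "('g \<Rightarrow> 'a) \<Rightarrow> real"
  assumes x: "fixH H x"
  shows "(\<Sum>v\<in>quot H. f (shift_act (rep v) (shift_act h x))) = (\<Sum>v\<in>quot H. f (shift_act (rep v) x))"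
proof -
  define g where "g v = coset (rep v + h) H" for v
  have gq: "g ` quot H \<subseteq> quot H" unfolding g_def quot_def by auto
  have ginj: "inj_on g (quot H)" unfolding inj_on_def g_def using coset_shift_inj by blast
  have bij: "bij_betw g (quot H) (quot H)"
    unfolding bij_betw_def using endo_inj_surj[OF finq gq ginj] ginj by simp
  have "(\<Sum>v\<in>quot H. f (shift_act (rep v) (shift_act h x))) = (\<Sum>v\<in>quot H. f (shift_act (rep (g v)) x))"
    by (rule sum.cong[OF refl]) (simp add: shift_act_add g_def shift_rep[OF H x])
  also have "\<dots> = (\<Sum>v\<in>quot H. f (shift_act (rep v) x))"
    by (rule sum.reindex_bij_betw[OF bij])
  finally show ?thesis .
qed


lemma empirical_integral:
  fixes f :: "('g \<Rightarrow> 'a) \<Rightarrow> real"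
  assumes x: "x \<in> Ob" and f: "f \<in> borel_measurable (shift_space A)"
  shows "integral\<^sup>L (empirical A (quot H) (Phi H x)) f = (\<Sum>v\<in>quot H. f (shift_act (rep v) x)) / card (quot H)"
    "prob_on A (empirical A (quot H) (Phi H x))"
proof -
  have xc: "x \<in> config A" using x Osub by auto
  have m: "(\<lambda>v. Pi_v v (Phi H x)) \<in> measurable (uniform_count_measure (quot H)) (shift_space A)"
  proof -
    have "(\<lambda>v. Pi_v v (Phi H x)) \<in> measurable (count_space (quot H)) (shift_space A)"
      using Pi_v_space[OF _ Phi_space[OF xc]] by auto
    then show ?thesis using measurable_cong_sets[OF sets_uniform_count_measure_count_space refl] by metis
  qed
  have "integral\<^sup>L (empirical A (quot H) (Phi H x)) f = integral\<^sup>L (uniform_count_measure (quot H)) (\<lambda>v. f (Pi_v v (Phi H x)))"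
    unfolding empirical_def by (rule integral_distr[OF m f])
  also have "\<dots> = (\<Sum>v\<in>quot H. f (Pi_v v (Phi H x))) / card (quot H)"
    by (rule integral_uniform_count_measure[OF finq])
  also have "\<dots> = (\<Sum>v\<in>quot H. f (shift_act (rep v) x)) / card (quot H)"
    using Pi_Phi[OF H _ fixO[OF x]] by simp
  finally show "integral\<^sup>L (empirical A (quot H) (Phi H x)) f = (\<Sum>v\<in>quot H. f (shift_act (rep v) x)) / card (quot H)" .
  have "prob_space (uniform_count_measure (quot H))"
    by (rule prob_space_uniform_count_measure[OF finq quot_nonempty])
  from prob_space.prob_space_distr[OF this m]
  show "prob_on A (empirical A (quot H) (Phi H x))"
    unfolding prob_on_def empirical_def by simp
qed

lemma erf_integral:
  fixes f :: "('g \<Rightarrow> 'a) \<Rightarrow> real"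
  assumes x: "x \<in> Ob" and clos: "\<And>h y. y \<in> Ob \<Longrightarrow> shift_act h y \<in> Ob"
    and orb: "measure \<nu> (range (\<lambda>h. shift_act h x)) = 1"
    and f: "f \<in> borel_measurable (shift_space A)"
  shows "integral\<^sup>L \<nu> f = (\<Sum>v\<in>quot H. f (shift_act (rep v) x)) / card (quot H)"
proof -
  define Orb where "Orb = range (\<lambda>h. shift_act h x)"
  have OrbO: "Orb \<subseteq> Ob" unfolding Orb_def using clos x by auto
  have finOrb: "finite Orb" using finite_subset[OF OrbO finO] .
  have Orbc: "Orb \<subseteq> config A" using OrbO Osub by auto
  have mOrb: "measure \<nu> Orb = 1" using orb by (simp add: Orb_def)
  define Avg where "Avg y = (\<Sum>v\<in>quot H. f (shift_act (rep v) y))" for y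
  have Avg_eq: "Avg y = Avg x" if "y \<in> Orb" for y
    using that avg_shift[OF fixO[OF x]] unfolding Orb_def Avg_def by auto
  have fsh: "(\<lambda>y. f (shift_act (rep v) y)) \<in> borel_measurable (shift_space A)" for v
    using measurable_comp[OF meas_shift_act f] by (simp add: comp_def)
  have each: "integral\<^sup>L \<nu> f = (\<Sum>y\<in>Orb. f (shift_act (rep v) y) * measure \<nu> {y})" for v
  proof -
    have "integral\<^sup>L \<nu> f = integral\<^sup>L \<nu> (\<lambda>y. f (shift_act (rep v) y))" by (rule integral_shift[OF f, symmetric])
    also have "\<dots> = (\<Sum>y\<in>Orb. f (shift_act (rep v) y) * measure \<nu> {y})"
      by (rule integral_fin_supp(2)[OF P finOrb Orbc mOrb fsh])
    finally show ?thesis .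
  qed
  have sing: "{y} \<in> sets \<nu>" if "y \<in> Orb" for y
    using sets_shift_singleton[of y A] Orbc that prob_onD(2)[OF P] by auto
  interpret prob_space \<nu> using prob_onD(1)[OF P] .
  have "real (card (quot H)) * integral\<^sup>L \<nu> f = (\<Sum>v\<in>quot H. integral\<^sup>L \<nu> f)" by simp
  also have "\<dots> = (\<Sum>v\<in>quot H. \<Sum>y\<in>Orb. f (shift_act (rep v) y) * measure \<nu> {y})"
    using each by simp
  also have "\<dots> = (\<Sum>y\<in>Orb. \<Sum>v\<in>quot H. f (shift_act (rep v) y) * measure \<nu> {y})"
    by (rule sum.swap)
  also have "\<dots> = (\<Sum>y\<in>Orb. Avg y * measure \<nu> {y})"
    unfolding Avg_def by (simp add: sum_distrib_right)
  also have "\<dots> = (\<Sum>y\<in>Orb. Avg x * measure \<nu> {y})"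
    using Avg_eq by simp
  also have "\<dots> = Avg x * measure \<nu> Orb"
    using measure_eq_sum_singleton[OF finOrb sing] by (simp add: sum_distrib_left)
  finally have "real (card (quot H)) * integral\<^sup>L \<nu> f = Avg x" using mOrb by simp
  moreover have "card (quot H) > 0" using finq quot_nonempty by (simp add: card_gt_0_iff)
  ultimately show ?thesis unfolding Avg_def by (simp add: field_simps)
qed

end

lemma orbit_full:
  fixes \<nu> :: "('g::group_add \<Rightarrow> 'a::discrete_topology) measure"
  assumes E: "ergodic_measure A \<nu>" and x: "x \<in> Ob" and pos: "measure \<nu> {x} > 0"
    and clos: "\<And>h y. y \<in> Ob \<Longrightarrow> shift_act h y \<in> Ob" and finO: "finite Ob" and Osub: "Ob \<subseteq> config A"
  shows "measure \<nu> (range (\<lambda>h. shift_act h x)) = 1"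
proof -
  define Orb where "Orb = range (\<lambda>h. shift_act h x)"
  have I: "invariant_measure A \<nu>" using E by (simp add: ergodic_measure_def)
  have P: "prob_on A \<nu>" by (rule invD(1)[OF I])
  interpret prob_space \<nu> using prob_onD(1)[OF P] .
  have OrbO: "Orb \<subseteq> Ob" unfolding Orb_def using clos x by auto
  have Os: "Orb \<in> sets \<nu>"
    using sets_shift_finite[OF finite_subset[OF OrbO finO]] OrbO Osub prob_onD(2)[OF P] by auto
  have invO: "shift_act h ` Orb = Orb" for h
  proof
    show "shift_act h ` Orb \<subseteq> Orb" unfolding Orb_def by (auto simp: shift_act_add)
    show "Orb \<subseteq> shift_act h ` Orb"
    proof
      fix y assume "y \<in> Orb"
      then obtain k where k: "y = shift_act k x" unfolding Orb_def by auto
      have "y = shift_act h (shift_act (-h + k) x)" using k by (simp add: shift_act_add add.assoc[symmetric])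
      then show "y \<in> shift_act h ` Orb" unfolding Orb_def by blast
    qed
  qed
  have "measure \<nu> Orb = 0 \<or> measure \<nu> Orb = 1"
    using E Os invO unfolding ergodic_measure_def by blast
  moreover have "measure \<nu> {x} \<le> measure \<nu> Orb"
  proof (rule finite_measure_mono)
    show "{x} \<subseteq> Orb" unfolding Orb_def by (auto intro: range_eqI[of _ _ 0])
  qed (rule Os)
  ultimately show ?thesis using pos unfolding Orb_def by auto
qed

lemma config_PiE: "config A = Pi\<^sub>E UNIV (\<lambda>_. A)"
  by (auto simp: config_def PiE_UNIV_domain)

lemma compact_config: "finite A \<Longrightarrow> compact (config A :: ('g \<Rightarrow> 'a::topological_space) set)"
proof -
  assume fin: "finite A"
  have "compactin (product_topology (\<lambda>_::'g. (euclidean::'a topology)) UNIV) (Pi\<^sub>E UNIV (\<lambda>_. A))"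
    unfolding compactin_PiE using fin by (auto intro: finite_imp_compact)
  then show ?thesis unfolding config_PiE euclidean_product_topology by simp
qed

lemma cont_local_cyl:
  fixes f :: "('g \<Rightarrow> 'a::discrete_topology) \<Rightarrow> real"
  assumes f: "continuous_on (config A) f" and w: "\<omega> \<in> config A" and e: "e > 0"
  shows "\<exists>J. finite J \<and> (\<forall>y\<in>config A. y \<in> cyl J \<omega> \<longrightarrow> \<bar>f y - f \<omega>\<bar> < e)"
proof -
  obtain U where U: "open U" "\<omega> \<in> U" "\<forall>y\<in>config A. y \<in> U \<longrightarrow> f y \<in> ball (f \<omega>) e"
    using f w e unfolding continuous_on_topological by (metis centre_in_ball open_ball)
  have "openin (product_topology (\<lambda>i. euclidean) UNIV) U" using U(1) by (simp add: open_fun_def)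
  from product_topology_open_contains_basis[OF this U(2)]
  obtain X where X: "\<omega> \<in> Pi\<^sub>E UNIV X" "\<forall>i. openin euclidean (X i)"
    "finite {i. X i \<noteq> topspace euclidean}" "Pi\<^sub>E UNIV X \<subseteq> U" by blast
  define J where "J = {i. X i \<noteq> UNIV}"
  have "finite J" using X(3) by (simp add: J_def)
  moreover have "cyl J \<omega> \<subseteq> U"
  proof
    fix y assume y: "y \<in> cyl J \<omega>"
    have "y \<in> Pi\<^sub>E UNIV X"
    proof (unfold PiE_UNIV_domain, rule Pi_I)
      fix i show "y i \<in> X i"
      proof (cases "i \<in> J")
        case True then show ?thesis using y X(1) by (auto simp: cyl_def PiE_UNIV_domain)
      next
        case False then show ?thesis by (simp add: J_def)
      qed
    qed
    then show "y \<in> U" using X(4) by blast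
  qed
  ultimately show ?thesis using U(3) by (intro exI[of _ J]) (auto simp: dist_real_def abs_minus_commute)
qed

lemma unif_cyl:
  fixes f :: "('g \<Rightarrow> 'a::discrete_topology) \<Rightarrow> real"
  assumes f: "continuous_on (config A) f" and fin: "finite A" and e: "e > 0"
  shows "\<exists>J. finite J \<and> (\<forall>x\<in>config A. \<forall>y\<in>config A. (\<forall>j\<in>J. x j = y j) \<longrightarrow> \<bar>f x - f y\<bar> < e)"
proof -
  have "\<forall>\<omega>\<in>config A. \<exists>J. finite J \<and> (\<forall>y\<in>config A. y \<in> cyl J \<omega> \<longrightarrow> \<bar>f y - f \<omega>\<bar> < e/2)"
    using cont_local_cyl[OF f _ half_gt_zero[OF e]] by blast
  then obtain Jf where Jf: "\<And>\<omega>. \<omega> \<in> config A \<Longrightarrow> finite (Jf \<omega>) \<and> (\<forall>y\<in>config A. y \<in> cyl (Jf \<omega>) \<omega> \<longrightarrow> \<bar>f y - f \<omega>\<bar> < e/2)"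
    by metis
  have opn: "\<And>T. T \<in> config A \<Longrightarrow> open (cyl (Jf T) T)" using Jf open_cyl by blast
  have cov: "config A \<subseteq> (\<Union>c\<in>config A. cyl (Jf c) c)" by (auto simp: cyl_def)
  obtain W where W: "W \<subseteq> config A" "finite W" "config A \<subseteq> (\<Union>c\<in>W. cyl (Jf c) c)"
    using compactE_image[OF compact_config[OF fin] opn cov] by blast
  define J where "J = (\<Union>c\<in>W. Jf c)"
  have "finite J" unfolding J_def using W Jf by auto
  moreover have "\<bar>f x - f y\<bar> < e" if x: "x \<in> config A" and y: "y \<in> config A" and xy: "\<forall>j\<in>J. x j = y j" for x y
  proof -
    obtain c where c: "c \<in> W" "x \<in> cyl (Jf c) c" using W(3) x by blast
    have "y \<in> cyl (Jf c) c" using c xy unfolding J_def cyl_def by auto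
    then have "\<bar>f y - f c\<bar> < e/2" using Jf[of c] c W(1) y by blast
    moreover have "\<bar>f x - f c\<bar> < e/2" using Jf[of c] c W(1) x by blast
    ultimately show ?thesis by linarith
  qed
  ultimately show ?thesis by blast
qed

lemma cont_bound:
  fixes f :: "('g \<Rightarrow> 'a::discrete_topology) \<Rightarrow> real"
  assumes f: "continuous_on (config A) f" and fin: "finite A"
  shows "\<exists>M\<ge>0. \<forall>x\<in>config A. \<bar>f x\<bar> \<le> M"
proof -
  have "compact (f ` config A)" by (rule compact_continuous_image[OF f compact_config[OF fin]])
  then have "bounded (f ` config A)" by (rule compact_imp_bounded)
  then obtain M where "\<forall>x\<in>config A. norm (f x) \<le> M" unfolding bounded_iff by auto
  then show ?thesis by (intro exI[of _ "max M 0"]) auto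
qed

lemma cont_integrable:
  fixes f :: "('g \<Rightarrow> 'a::discrete_topology) \<Rightarrow> real"
  assumes f: "continuous_on (config A) f" and fin: "finite A" and P: "prob_on A \<nu>"
  shows "integrable \<nu> f"
proof -
  interpret prob_space \<nu> using prob_onD(1)[OF P] .
  obtain M where M: "\<forall>x\<in>config A. \<bar>f x\<bar> \<le> M" using cont_bound[OF f fin] by blast
  show ?thesis
  proof (rule integrable_const_bound)
    show "AE x in \<nu>. norm (f x) \<le> M" using M prob_onD(3)[OF P] by (intro AE_I2) auto
    show "f \<in> borel_measurable \<nu>" by (rule borel_nu[OF P meas_cont[OF f]])
  qed
qed

lemma int_abs_le:
  fixes h :: "('g \<Rightarrow> 'a::topological_space) \<Rightarrow> real"
  assumes P: "prob_on A \<nu>" and hi: "integrable \<nu> h" and b: "\<And>x. x \<in> config A \<Longrightarrow> \<bar>h x\<bar> \<le> c"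
  shows "\<bar>integral\<^sup>L \<nu> h\<bar> \<le> c"
proof -
  interpret prob_space \<nu> using prob_onD(1)[OF P] .
  have "integral\<^sup>L \<nu> h \<le> integral\<^sup>L \<nu> (\<lambda>_. c)"
    by (rule integral_mono[OF hi]) (use prob_onD(3)[OF P] in \<open>auto dest!: b simp: abs_le_iff\<close>)
  moreover have "integral\<^sup>L \<nu> (\<lambda>_. -c) \<le> integral\<^sup>L \<nu> h"
    by (rule integral_mono[OF _ hi]) (use prob_onD(3)[OF P] in \<open>auto dest!: b simp: abs_le_iff\<close>)
  ultimately show ?thesis by (simp add: prob_space abs_le_iff)
qed

lemma finite_in_range_prefix:
  assumes "finite J" "J \<subseteq> range e"
  shows "\<exists>k. J \<subseteq> e ` {..k::nat}"
  using assms
proof (induction J rule: finite_induct)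
  case empty then show ?case by auto
next
  case (insert j F)
  then obtain k where k: "F \<subseteq> e ` {..k}" by auto
  obtain n where n: "j = e n" using insert.prems by auto
  have "insert j F \<subseteq> e ` {..max k n}" using k n by auto
  then show ?case by blast
qed

definition chi :: "'g set \<Rightarrow> ('g \<Rightarrow> 'a) \<Rightarrow> ('g \<Rightarrow> 'a) \<Rightarrow> real" where
  "chi B p \<omega> = (if \<forall>j\<in>B. \<omega> j = p j then 1 else 0)"

definition extd :: "'g set \<Rightarrow> 'a \<Rightarrow> ('g \<Rightarrow> 'a) \<Rightarrow> ('g \<Rightarrow> 'a)" where
  "extd B a0 \<omega> = (\<lambda>j. if j \<in> B then \<omega> j else a0)"

lemma chi_cont: "finite B \<Longrightarrow> continuous_on S (chi B (p::'g \<Rightarrow> 'a::discrete_topology))"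
  by (rule cont_cyl_fun[of B]) (auto simp: chi_def)

lemma extd_config: "\<omega> \<in> B \<rightarrow>\<^sub>E A \<or> \<omega> \<in> config A \<Longrightarrow> a0 \<in> A \<Longrightarrow> extd B a0 \<omega> \<in> config A"
  by (auto simp: extd_def config_def PiE_iff)

lemma decomp:
  fixes f :: "('g \<Rightarrow> 'a) \<Rightarrow> real"
  assumes finB: "finite B" and finA: "finite A" and w: "\<omega> \<in> config A"
  shows "f (extd B a0 \<omega>) = (\<Sum>p\<in>B \<rightarrow>\<^sub>E A. f (extd B a0 p) * chi B p \<omega>)"
proof -
  define q where "q = restrict \<omega> B"
  have q: "q \<in> B \<rightarrow>\<^sub>E A" using w by (auto simp: q_def config_def)
  have c: "chi B p \<omega> = (if p = q then 1 else 0)" if "p \<in> B \<rightarrow>\<^sub>E A" for p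
    using that by (auto simp: chi_def q_def fun_eq_iff PiE_iff extensional_def)
  have "(\<Sum>p\<in>B \<rightarrow>\<^sub>E A. f (extd B a0 p) * chi B p \<omega>) = (\<Sum>p\<in>B \<rightarrow>\<^sub>E A. if p = q then f (extd B a0 p) else 0)"
    by (rule sum.cong[OF refl]) (simp add: c)
  also have "\<dots> = f (extd B a0 q)" using q finB finA by (simp add: sum.delta finite_PiE)
  also have "extd B a0 q = extd B a0 \<omega>" by (auto simp: extd_def q_def)
  finally show ?thesis by simp
qed

lemma integral_decomp:
  fixes f :: "('g \<Rightarrow> 'a::discrete_topology) \<Rightarrow> real"
  assumes finB: "finite B" and finA: "finite A" and P: "prob_on A \<rho>"
  shows "integral\<^sup>L \<rho> (\<lambda>\<omega>. f (extd B a0 \<omega>)) = (\<Sum>p\<in>B \<rightarrow>\<^sub>E A. f (extd B a0 p) * integral\<^sup>L \<rho> (chi B p))"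
proof -
  have ci: "integrable \<rho> (\<lambda>\<omega>. f (extd B a0 p) * chi B p \<omega>)" for p
    by (rule integrable_mult_right) (rule cont_integrable[OF chi_cont[OF finB] finA P])
  have "integral\<^sup>L \<rho> (\<lambda>\<omega>. f (extd B a0 \<omega>)) = integral\<^sup>L \<rho> (\<lambda>\<omega>. \<Sum>p\<in>B \<rightarrow>\<^sub>E A. f (extd B a0 p) * chi B p \<omega>)"
    by (rule Bochner_Integration.integral_cong[OF refl]) (use decomp[OF finB finA] prob_onD(3)[OF P] in auto)
  also have "\<dots> = (\<Sum>p\<in>B \<rightarrow>\<^sub>E A. integral\<^sup>L \<rho> (\<lambda>\<omega>. f (extd B a0 p) * chi B p \<omega>))"
    by (rule Bochner_Integration.integral_sum[where I="B \<rightarrow>\<^sub>E A" and f="\<lambda>p \<omega>. f (extd B a0 p) * chi B p \<omega>"]) (rule ci)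
  also have "\<dots> = (\<Sum>p\<in>B \<rightarrow>\<^sub>E A. f (extd B a0 p) * integral\<^sup>L \<rho> (chi B p))" by simp
  finally show ?thesis .
qed

lemma approx_seq:
  fixes A :: "'a::discrete_topology set" and \<mu> :: "('g \<Rightarrow> 'a) measure"
    and Q :: "('g \<Rightarrow> 'a) measure \<Rightarrow> bool" and e :: "nat \<Rightarrow> 'g"
  assumes e: "range e = UNIV" and finA: "finite A" and P: "prob_on A \<mu>"
    and Hq: "\<And>F \<epsilon>. finite F \<Longrightarrow> F \<subseteq> cont_funs A \<Longrightarrow> \<epsilon> > 0 \<Longrightarrow> \<exists>\<nu>. Q \<nu> \<and> \<nu> \<in> weak_nbhd A \<mu> F \<epsilon>"
  shows "\<exists>\<nu>s. (\<forall>k. Q (\<nu>s k)) \<and> (\<forall>F \<epsilon>. finite F \<longrightarrow> F \<subseteq> cont_funs A \<longrightarrow> \<epsilon> > 0 \<longrightarrow>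
            eventually (\<lambda>k. \<nu>s k \<in> weak_nbhd A \<mu> F \<epsilon>) sequentially)"
proof -
  interpret mu: prob_space \<mu> using prob_onD(1)[OF P] .
  have "config A \<noteq> ({} :: ('g \<Rightarrow> 'a) set)" using mu.not_empty prob_onD(3)[OF P] by simp
  then obtain \<omega>0 :: "'g \<Rightarrow> 'a" where "\<omega>0 \<in> config A" by blast
  then have a0: "\<omega>0 undefined \<in> A" by (simp add: config_def)
  define a0 where "a0 = \<omega>0 undefined"
  define B where "B k = e ` {..k}" for k
  define Pk where "Pk k = B k \<rightarrow>\<^sub>E A" for k
  define F where "F k = (\<lambda>p. chi (B k) p) ` Pk k" for k
  define \<delta> where "\<delta> k = 1 / ((real k + 1) * (real (card (Pk k)) + 1))" for k
  have finB: "finite (B k)" for k by (simp add: B_def)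
  have finPk: "finite (Pk k)" for k using finB finA by (simp add: Pk_def finite_PiE)
  have finF: "finite (F k)" for k using finPk by (simp add: F_def)
  have Fc: "F k \<subseteq> cont_funs A" for k using chi_cont[OF finB] by (auto simp: F_def cont_funs_def)
  have dpos: "\<delta> k > 0" for k by (simp add: \<delta>_def)
  have "\<forall>k. \<exists>\<nu>. Q \<nu> \<and> \<nu> \<in> weak_nbhd A \<mu> (F k) (\<delta> k)" using Hq[OF finF Fc dpos] by blast
  then obtain \<nu>s where \<nu>s: "\<And>k. Q (\<nu>s k) \<and> \<nu>s k \<in> weak_nbhd A \<mu> (F k) (\<delta> k)" by metis
  have Pn: "prob_on A (\<nu>s k)" for k using \<nu>s[of k] by (simp add: weak_nbhd_def)
  have chi_close: "\<bar>integral\<^sup>L (\<nu>s k) (chi (B k) p) - integral\<^sup>L \<mu> (chi (B k) p)\<bar> < \<delta> k" if "p \<in> Pk k" for k p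
    using \<nu>s[of k] that by (auto simp: weak_nbhd_def F_def)
  have key: "eventually (\<lambda>k. \<bar>integral\<^sup>L (\<nu>s k) f - integral\<^sup>L \<mu> f\<bar> < \<epsilon>) sequentially"
    if fC: "f \<in> cont_funs A" and ep: "\<epsilon> > 0" for f \<epsilon>
  proof -
    have fc: "continuous_on (config A) f" using fC by (simp add: cont_funs_def)
    have e4: "\<epsilon>/4 > 0" using ep by simp
    obtain J where J: "finite J" "\<forall>x\<in>config A. \<forall>y\<in>config A. (\<forall>j\<in>J. x j = y j) \<longrightarrow> \<bar>f x - f y\<bar> < \<epsilon>/4"
      using unif_cyl[OF fc finA e4] by blast
    obtain k0 where k0: "J \<subseteq> B k0" using finite_in_range_prefix[OF J(1), of e] e by (auto simp: B_def)
    obtain M where M: "M \<ge> 0" "\<forall>x\<in>config A. \<bar>f x\<bar> \<le> M" using cont_bound[OF fc finA] by blast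
    have ev1: "eventually (\<lambda>k. k0 \<le> k) sequentially" by (rule eventually_ge_at_top)
    have lim: "(\<lambda>k. M * inverse (real (Suc k))) \<longlonglongrightarrow> M * 0"
      by (rule tendsto_mult[OF tendsto_const LIMSEQ_inverse_real_of_nat])
    have "M * 0 < \<epsilon>/4" using e4 by simp
    from order_tendstoD(2)[OF lim this]
    have "eventually (\<lambda>k. M * inverse (real (Suc k)) < \<epsilon>/4) sequentially" .
    moreover have eq: "M * inverse (real (Suc k)) = M / (real k + 1)" for k
    proof -
      have "real (Suc k) = real k + 1" by simp
      then show ?thesis by (simp only: divide_inverse)
    qed
    ultimately have ev2: "eventually (\<lambda>k. M / (real k + 1) < \<epsilon>/4) sequentially"
      by (metis (no_types, lifting) eventually_mono)
    show ?thesis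
    proof (rule eventually_mono[OF eventually_conj[OF ev1 ev2]], clarify)
      fix k assume kk: "k0 \<le> k" and Mk: "M / (real k + 1) < \<epsilon>/4"
      define g where "g \<omega> = f (extd (B k) a0 \<omega>)" for \<omega>
      have Bsub: "J \<subseteq> B k" using k0 kk unfolding B_def by auto
      have gc: "continuous_on (config A) g"
        unfolding g_def by (rule cont_cyl_fun[OF finB[of k]]) (auto simp: extd_def intro!: arg_cong[where f=f])
      have ext_c: "extd (B k) a0 \<omega> \<in> config A" if "\<omega> \<in> config A" for \<omega>
        using extd_config a0 that a0_def by metis
      have close: "\<bar>f \<omega> - g \<omega>\<bar> \<le> \<epsilon>/4" if "\<omega> \<in> config A" for \<omega>
      proof -
        have "\<forall>j\<in>J. \<omega> j = extd (B k) a0 \<omega> j" using Bsub by (auto simp: extd_def)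
        then show ?thesis using J(2) that ext_c[OF that] unfolding g_def by fastforce
      qed
      have fg: "\<bar>integral\<^sup>L \<rho> f - integral\<^sup>L \<rho> g\<bar> \<le> \<epsilon>/4" if Pr: "prob_on A \<rho>" for \<rho>
      proof -
        have fi: "integrable \<rho> f" by (rule cont_integrable[OF fc finA Pr])
        have gi: "integrable \<rho> g" by (rule cont_integrable[OF gc finA Pr])
        have "integral\<^sup>L \<rho> f - integral\<^sup>L \<rho> g = integral\<^sup>L \<rho> (\<lambda>x. f x - g x)"
          by (rule Bochner_Integration.integral_diff[OF fi gi, symmetric])
        also have "\<bar>\<dots>\<bar> \<le> \<epsilon>/4"
          by (rule int_abs_le[OF Pr]) (use fi gi close in auto)
        finally show ?thesis .
      qed
      have gint: "integral\<^sup>L \<rho> g = (\<Sum>p\<in>Pk k. f (extd (B k) a0 p) * integral\<^sup>L \<rho> (chi (B k) p))"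
        if Pr: "prob_on A \<rho>" for \<rho>
        unfolding g_def Pk_def by (rule integral_decomp[OF finB finA Pr])
      have bndp: "\<bar>f (extd (B k) a0 p)\<bar> \<le> M" if "p \<in> Pk k" for p
        using M(2) extd_config[of p "B k" A a0] that a0 a0_def by (auto simp: Pk_def)
      have "\<bar>integral\<^sup>L (\<nu>s k) g - integral\<^sup>L \<mu> g\<bar>
          = \<bar>\<Sum>p\<in>Pk k. f (extd (B k) a0 p) * (integral\<^sup>L (\<nu>s k) (chi (B k) p) - integral\<^sup>L \<mu> (chi (B k) p))\<bar>"
        using gint[OF Pn] gint[OF P] by (simp add: sum_subtractf right_diff_distrib)
      also have "\<dots> \<le> (\<Sum>p\<in>Pk k. \<bar>f (extd (B k) a0 p) * (integral\<^sup>L (\<nu>s k) (chi (B k) p) - integral\<^sup>L \<mu> (chi (B k) p))\<bar>)"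
        by (rule sum_abs)
      also have "\<dots> \<le> (\<Sum>p\<in>Pk k. M * \<delta> k)"
      proof (rule sum_mono)
        fix p assume p: "p \<in> Pk k"
        show "\<bar>f (extd (B k) a0 p) * (integral\<^sup>L (\<nu>s k) (chi (B k) p) - integral\<^sup>L \<mu> (chi (B k) p))\<bar> \<le> M * \<delta> k"
          unfolding abs_mult using bndp[OF p] chi_close[OF p] M(1)
          by (intro mult_mono) auto
      qed
      also have "\<dots> = M * (real (card (Pk k)) * \<delta> k)" by simp
      also have "\<dots> \<le> M * (1 / (real k + 1))"
      proof (rule mult_left_mono[OF _ M(1)])
        have d: "real (card (Pk k)) * \<delta> k = (real (card (Pk k)) / (real (card (Pk k)) + 1)) / (real k + 1)"
          unfolding \<delta>_def by (simp add: field_simps)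
        have "real (card (Pk k)) / (real (card (Pk k)) + 1) \<le> 1" by simp
        then show "real (card (Pk k)) * \<delta> k \<le> 1 / (real k + 1)"
          unfolding d by (rule divide_right_mono) simp
      qed
      also have "\<dots> = M / (real k + 1)" by simp
      finally have gg0: "\<bar>integral\<^sup>L (\<nu>s k) g - integral\<^sup>L \<mu> g\<bar> \<le> M / (real k + 1)" .
      have gg: "\<bar>integral\<^sup>L (\<nu>s k) g - integral\<^sup>L \<mu> g\<bar> < \<epsilon>/4" using gg0 Mk by linarith
      have "\<bar>integral\<^sup>L (\<nu>s k) f - integral\<^sup>L \<mu> f\<bar> \<le>
          \<bar>integral\<^sup>L (\<nu>s k) f - integral\<^sup>L (\<nu>s k) g\<bar> + \<bar>integral\<^sup>L (\<nu>s k) g - integral\<^sup>L \<mu> g\<bar>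
          + \<bar>integral\<^sup>L \<mu> f - integral\<^sup>L \<mu> g\<bar>" by linarith
      then show "\<bar>integral\<^sup>L (\<nu>s k) f - integral\<^sup>L \<mu> f\<bar> < \<epsilon>"
        using fg[OF Pn[of k]] fg[OF P] gg ep by linarith
    qed
  qed
  show ?thesis
  proof (intro exI[of _ \<nu>s] conjI allI impI)
    show "Q (\<nu>s k)" for k using \<nu>s by blast
    fix F' :: "(('g \<Rightarrow> 'a) \<Rightarrow> real) set" and \<epsilon> :: real
    assume F': "finite F'" "F' \<subseteq> cont_funs A" "\<epsilon> > 0"
    have "eventually (\<lambda>k. \<forall>f\<in>F'. \<bar>integral\<^sup>L (\<nu>s k) f - integral\<^sup>L \<mu> f\<bar> < \<epsilon>) sequentially"
      using F' key by (intro eventually_ball_finite) auto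
    then show "eventually (\<lambda>k. \<nu>s k \<in> weak_nbhd A \<mu> F' \<epsilon>) sequentially"
      by eventually_elim (use Pn in \<open>auto simp: weak_nbhd_def\<close>)
  qed
qed

lemma cont_pointwise:
  fixes c :: "'a::discrete_topology \<Rightarrow> 'b::topological_space"
  shows "continuous_on S (\<lambda>\<omega>::'g \<Rightarrow> 'a. \<lambda>g. c (\<omega> g))"
proof (rule continuous_on_coordinatewise_then_product)
  fix i
  show "continuous_on S (\<lambda>\<omega>::'g \<Rightarrow> 'a. c (\<omega> i))"
    by (rule continuous_on_compose2[of UNIV c S "\<lambda>\<omega>. \<omega> i"])
       (auto intro: continuous_on_subset[OF continuous_on_product_coordinates])
qed

locale push =
  fixes T :: "('g::group_add \<Rightarrow> 'a::discrete_topology) \<Rightarrow> ('g \<Rightarrow> 'b::discrete_topology)" and A :: "'a set" and B :: "'b set"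
  assumes Tc: "continuous_on UNIV T" and Tm: "\<And>\<omega>. \<omega> \<in> config A \<Longrightarrow> T \<omega> \<in> config B"
    and Tcomm: "\<And>h \<omega>. T (shift_act h \<omega>) = shift_act h (T \<omega>)"
begin

lemma Tmeas: "T \<in> measurable (shift_space A) (shift_space B)"
  by (rule meas_cont_shift) (use Tc Tm in \<open>auto intro: continuous_on_subset\<close>)

lemma Tmeas_nu: "prob_on A \<mu> \<Longrightarrow> T \<in> measurable \<mu> (shift_space B)"
  using Tmeas measurable_cong_sets[OF prob_onD(2) refl] by metis

lemma push_prob: assumes P: "prob_on A \<mu>" shows "prob_on B (distr \<mu> (shift_space B) T)"
  unfolding prob_on_def using prob_space.prob_space_distr[OF prob_onD(1)[OF P] Tmeas_nu[OF P]] by auto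

lemma push_inv:
  assumes I: "invariant_measure A \<mu>"
  shows "invariant_measure B (distr \<mu> (shift_space B) T)"
proof -
  have P: "prob_on A \<mu>" by (rule invD(1)[OF I])
  have "distr (distr \<mu> (shift_space B) T) (shift_space B) (shift_act h) = distr \<mu> (shift_space B) T" for h
  proof -
    have "distr (distr \<mu> (shift_space B) T) (shift_space B) (shift_act h) = distr \<mu> (shift_space B) (shift_act h \<circ> T)"
      by (rule distr_distr[OF meas_shift_act Tmeas_nu[OF P]])
    also have "shift_act h \<circ> T = T \<circ> shift_act h" by (auto simp: Tcomm)
    also have "distr \<mu> (shift_space B) (T \<circ> shift_act h) = distr (distr \<mu> (shift_space A) (shift_act h)) (shift_space B) T"
      by (rule distr_distr[OF Tmeas meas_shift_nu[OF P], symmetric])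
    also have "\<dots> = distr \<mu> (shift_space B) T" using invD(2)[OF I] by simp
    finally show ?thesis .
  qed
  then show ?thesis using push_prob[OF P] by (simp add: invariant_measure_def)
qed

lemma push_periodic:
  assumes Pe: "periodic_measure A \<mu>"
  shows "periodic_measure B (distr \<mu> (shift_space B) T)"
proof -
  have I: "invariant_measure A \<mu>" using Pe by (simp add: periodic_measure_def)
  have P: "prob_on A \<mu>" by (rule invD(1)[OF I])
  interpret prob_space \<mu> using prob_onD(1)[OF P] .
  obtain S where S: "finite S" "S \<in> sets \<mu>" "measure \<mu> S = 1" using Pe unfolding periodic_measure_def by blast
  have Ssub: "S \<subseteq> config A" using sets.sets_into_space[OF S(2)] prob_onD(3)[OF P] by simp
  have TS: "T ` S \<in> sets (shift_space B)" using S(1) Ssub Tm by (intro sets_shift_finite) auto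
  have "measure (distr \<mu> (shift_space B) T) (T ` S) = measure \<mu> (T -` (T ` S) \<inter> space \<mu>)"
    by (rule measure_distr[OF Tmeas_nu[OF P] TS])
  moreover have "measure \<mu> S \<le> measure \<mu> (T -` (T ` S) \<inter> space \<mu>)"
    by (rule finite_measure_mono) (use Ssub prob_onD(3)[OF P] measurable_sets[OF Tmeas_nu[OF P] TS] in auto)
  moreover have "measure \<mu> (T -` (T ` S) \<inter> space \<mu>) \<le> 1" by (rule prob_le_1)
  ultimately have "measure (distr \<mu> (shift_space B) T) (T ` S) = 1" using S(3) by simp
  then show ?thesis unfolding periodic_measure_def using push_inv[OF I] TS S(1) by auto
qed

lemma push_ergodic:
  assumes E: "ergodic_measure A \<mu>"
  shows "ergodic_measure B (distr \<mu> (shift_space B) T)"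
proof -
  have I: "invariant_measure A \<mu>" using E by (simp add: ergodic_measure_def)
  have P: "prob_on A \<mu>" by (rule invD(1)[OF I])
  have "measure (distr \<mu> (shift_space B) T) X = 0 \<or> measure (distr \<mu> (shift_space B) T) X = 1"
    if X: "X \<in> sets (shift_space B)" and inv: "\<forall>h. shift_act h ` X = X" for X
  proof -
    define X' where "X' = T -` X \<inter> config A"
    have X's: "X' \<in> sets \<mu>" unfolding X'_def
      using measurable_sets[OF Tmeas_nu[OF P] X] prob_onD(3)[OF P] by simp
    have sub: "shift_act h ` X' \<subseteq> X'" for h
    proof
      fix y assume "y \<in> shift_act h ` X'"
      then obtain \<omega> where w: "\<omega> \<in> X'" "y = shift_act h \<omega>" by blast
      have "T y = shift_act h (T \<omega>)" using w by (simp add: Tcomm)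
      moreover have "shift_act h (T \<omega>) \<in> X" using inv w(1) unfolding X'_def by blast
      ultimately show "y \<in> X'" using w shift_act_config unfolding X'_def by auto
    qed
    have "shift_act h ` X' = X'" for h
    proof
      show "X' \<subseteq> shift_act h ` X'"
      proof
        fix \<omega> assume "\<omega> \<in> X'"
        then have "shift_act (-h) \<omega> \<in> X'" using sub by blast
        moreover have "\<omega> = shift_act h (shift_act (-h) \<omega>)" by (simp add: shift_inv)
        ultimately show "\<omega> \<in> shift_act h ` X'" by blast
      qed
    qed (rule sub)
    then have "measure \<mu> X' = 0 \<or> measure \<mu> X' = 1" using E X's unfolding ergodic_measure_def by blast
    moreover have "measure (distr \<mu> (shift_space B) T) X = measure \<mu> X'"
      unfolding X'_def using measure_distr[OF Tmeas_nu[OF P] X] prob_onD(3)[OF P] by simp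
    ultimately show ?thesis by simp
  qed
  then show ?thesis unfolding ergodic_measure_def using push_inv[OF I] by simp
qed

lemma push_integral:
  fixes f :: "('g \<Rightarrow> 'b) \<Rightarrow> real"
  assumes P: "prob_on A \<mu>" and f: "f \<in> borel_measurable (shift_space B)"
  shows "integral\<^sup>L (distr \<mu> (shift_space B) T) f = integral\<^sup>L \<mu> (\<lambda>x. f (T x))"
  by (rule integral_distr[OF Tmeas_nu[OF P] f])

end

lemma transfer_approx:
  fixes A :: "'a::discrete_topology set" and \<mu> :: "('g::group_add \<Rightarrow> 'a) measure"
  assumes finA: "finite A" and I: "invariant_measure A \<mu>" and F: "finite F" "F \<subseteq> cont_funs A" and ep: "\<epsilon> > 0"
    and H: "\<And>(\<mu>'::('g \<Rightarrow> nat) measure) F' \<epsilon>'. invariant_measure {0..<card A} \<mu>' \<Longrightarrow> finite F' \<Longrightarrow>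
       F' \<subseteq> cont_funs {0..<card A} \<Longrightarrow> \<epsilon>' > 0 \<Longrightarrow>
       (\<exists>\<nu>. periodic_measure {0..<card A} \<nu> \<and> (E \<longrightarrow> ergodic_measure {0..<card A} \<nu>) \<and> \<nu> \<in> weak_nbhd {0..<card A} \<mu>' F' \<epsilon>')"
  shows "\<exists>\<nu>. periodic_measure A \<nu> \<and> (E \<longrightarrow> ergodic_measure A \<nu>) \<and> \<nu> \<in> weak_nbhd A \<mu> F \<epsilon>"
proof -
  define N where "N = {0..<card A}"
  obtain c where c: "bij_betw c A N" using ex_bij_betw_finite_nat[OF finA] unfolding N_def by blast
  define d where "d = the_inv_into A c"
  have cinj: "inj_on c A" and cA: "c ` A = N" using c by (auto simp: bij_betw_def)
  have dN: "d n \<in> A" if "n \<in> N" for n using the_inv_into_into[OF cinj, of n A] that cA by (simp add: d_def)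
  have dc: "d (c a) = a" if "a \<in> A" for a using the_inv_into_f_f[OF cinj that] by (simp add: d_def)
  define Tc where "Tc = (\<lambda>\<omega>::'g \<Rightarrow> 'a. \<lambda>g. c (\<omega> g))"
  define Td where "Td = (\<lambda>\<omega>::'g \<Rightarrow> nat. \<lambda>g. d (\<omega> g))"
  interpret pc: push Tc A N
    by unfold_locales (use cA in \<open>auto simp: Tc_def config_def shift_act_def intro: cont_pointwise\<close>)
  interpret pd: push Td N A
    by unfold_locales (use dN in \<open>auto simp: Td_def config_def shift_act_def intro: cont_pointwise\<close>)
  have P: "prob_on A \<mu>" by (rule invD(1)[OF I])
  define \<mu>' where "\<mu>' = distr \<mu> (shift_space N) Tc"
  have I': "invariant_measure N \<mu>'" unfolding \<mu>'_def by (rule pc.push_inv[OF I])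
  define F' where "F' = (\<lambda>f x. f (Td x)) ` F"
  have F'f: "finite F'" using F by (simp add: F'_def)
  have F'c: "F' \<subseteq> cont_funs N"
  proof
    fix f' assume "f' \<in> F'"
    then obtain f where f: "f \<in> F" "f' = (\<lambda>x. f (Td x))" by (auto simp: F'_def)
    have "continuous_on (config A) f" using f F(2) by (auto simp: cont_funs_def)
    then have "continuous_on (config N) (\<lambda>x. f (Td x))"
      by (rule continuous_on_compose2) (use pd.Tc pd.Tm in \<open>auto intro: continuous_on_subset\<close>)
    then show "f' \<in> cont_funs N" using f by (simp add: cont_funs_def)
  qed
  obtain \<nu>' where \<nu>': "periodic_measure N \<nu>'" "E \<longrightarrow> ergodic_measure N \<nu>'" "\<nu>' \<in> weak_nbhd N \<mu>' F' \<epsilon>"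
    using H[OF I'[unfolded N_def] F'f F'c[unfolded N_def] ep] unfolding N_def by blast
  define \<nu> where "\<nu> = distr \<nu>' (shift_space A) Td"
  have P': "prob_on N \<nu>'" using \<nu>'(3) by (simp add: weak_nbhd_def)
  have Pmu': "prob_on N \<mu>'" by (rule invD(1)[OF I'])
  have "\<nu> \<in> weak_nbhd A \<mu> F \<epsilon>"
    unfolding weak_nbhd_def
  proof (intro CollectI conjI ballI)
    show "prob_on A \<nu>" unfolding \<nu>_def by (rule pd.push_prob[OF P'])
    fix f assume fF: "f \<in> F"
    have fc: "continuous_on (config A) f" using fF F(2) by (auto simp: cont_funs_def)
    have fm: "f \<in> borel_measurable (shift_space A)" by (rule meas_cont[OF fc])
    have fm': "(\<lambda>x. f (Td x)) \<in> borel_measurable (shift_space N)"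
      using measurable_comp[OF pd.Tmeas fm] by (simp add: comp_def)
    have e1: "integral\<^sup>L \<nu> f = integral\<^sup>L \<nu>' (\<lambda>x. f (Td x))"
      unfolding \<nu>_def by (rule pd.push_integral[OF P' fm])
    have "integral\<^sup>L \<mu>' (\<lambda>x. f (Td x)) = integral\<^sup>L \<mu> (\<lambda>x. f (Td (Tc x)))"
      unfolding \<mu>'_def by (rule pc.push_integral[OF P fm'])
    also have "\<dots> = integral\<^sup>L \<mu> f"
      by (rule Bochner_Integration.integral_cong[OF refl])
         (use prob_onD(3)[OF P] dc in \<open>auto simp: Td_def Tc_def config_def\<close>)
    finally have e2: "integral\<^sup>L \<mu>' (\<lambda>x. f (Td x)) = integral\<^sup>L \<mu> f" .
    have "(\<lambda>x. f (Td x)) \<in> F'" using fF by (auto simp: F'_def)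
    then have "\<bar>integral\<^sup>L \<nu>' (\<lambda>x. f (Td x)) - integral\<^sup>L \<mu>' (\<lambda>x. f (Td x))\<bar> < \<epsilon>"
      using \<nu>'(3) by (auto simp: weak_nbhd_def)
    then show "\<bar>integral\<^sup>L \<nu> f - integral\<^sup>L \<mu> f\<bar> < \<epsilon>" using e1 e2 by simp
  qed
  moreover have "periodic_measure A \<nu>" unfolding \<nu>_def by (rule pd.push_periodic[OF \<nu>'(1)])
  moreover have "E \<longrightarrow> ergodic_measure A \<nu>" unfolding \<nu>_def using pd.push_ergodic \<nu>'(2) by blast
  ultimately show ?thesis by blast
qed

lemma fg_countable:
  assumes "finitely_generated TYPE('g::group_add)"
  shows "countable (UNIV :: 'g set)"
proof -
  obtain S :: "'g set" where S: "finite S" "gen_subgroup S = UNIV"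
    using assms unfolding finitely_generated_def by blast
  define W where "W = rec_nat (insert 0 S) (\<lambda>_ X. X \<union> (\<lambda>(x, y). x + y) ` (X \<times> X) \<union> uminus ` X)"
  have W0: "W 0 = insert 0 S" and WS: "W (Suc n) = W n \<union> (\<lambda>(x, y). x + y) ` (W n \<times> W n) \<union> uminus ` W n" for n
    by (simp_all add: W_def)
  have finW: "finite (W n)" for n by (induction n) (use S(1) in \<open>simp_all add: W0 WS\<close>)
  have Wmono: "W n \<subseteq> W m" if "n \<le> m" for n m
    using that by (induction m) (auto simp: WS le_Suc_eq)
  have "x \<in> (\<Union>n. W n)" if "x \<in> gen_subgroup S" for x
    using that
  proof (induction rule: gen_subgroup.induct)
    case gen_zero then show ?case using W0 by blast
  next
    case (gen_base s) then show ?case using W0 by blast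
  next
    case (gen_add x y)
    then obtain n m where "x \<in> W n" "y \<in> W m" by blast
    then have "x \<in> W (max n m)" "y \<in> W (max n m)" using Wmono by (meson max.cobounded1 max.cobounded2 subsetD)+
    then have "x + y \<in> W (Suc (max n m))" unfolding WS by blast
    then show ?case by blast
  next
    case (gen_uminus x)
    then obtain n where "x \<in> W n" by blast
    then have "- x \<in> W (Suc n)" unfolding WS by blast
    then show ?case by blast
  qed
  then have "UNIV \<subseteq> (\<Union>n. W n)" using S(2) by blast
  moreover have "countable (\<Union>n. W n)" using finW by (intro countable_UN) (auto intro: countable_finite)
  ultimately show ?thesis by (rule countable_subset)
qed

definition Dfun :: "'g \<Rightarrow> 'g \<Rightarrow> ('g \<Rightarrow> nat) \<Rightarrow> real" where
  "Dfun i j \<omega> = (if \<omega> i = \<omega> j then 0 else 1)"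

lemma Dfun_cont: "continuous_on S (Dfun i j)"
  by (rule cont_cyl_fun[of "{i, j}"]) (auto simp: Dfun_def)

lemma bernoulli_exists:
  fixes idx :: "'g::group_add \<Rightarrow> nat" and i j :: 'g
  assumes inj: "inj idx" and ij: "i \<noteq> j"
  shows "\<exists>\<mu>::('g \<Rightarrow> nat) measure. invariant_measure {0,1} \<mu> \<and> integral\<^sup>L \<mu> (Dfun i j) > 0"
proof -
  define B :: "nat measure" where "B = measure_pmf (pmf_of_set {0,1::nat})"
  define Pm where "Pm = PiM UNIV (\<lambda>_::nat. B)"
  have probB: "prob_space B" unfolding B_def by (rule prob_space_measure_pmf)
  interpret Pm: prob_space Pm unfolding Pm_def by (rule prob_space_PiM) (rule probB)
  have "sets Pm = sets (PiM UNIV (\<lambda>_::nat. borel::nat measure))"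
    unfolding Pm_def by (rule sets_PiM_cong) (auto simp: B_def sets_borel_eq_count_space)
  also have "\<dots> = sets (borel :: (nat \<Rightarrow> nat) measure)" by (rule sets_PiM_equal_borel)
  finally have setsPm: "sets Pm = sets (borel :: (nat \<Rightarrow> nat) measure)" .
  define Psi :: "(nat \<Rightarrow> nat) \<Rightarrow> ('g \<Rightarrow> nat)" where "Psi x = (\<lambda>g. min 1 (x (idx g)))" for x
  have Psic: "continuous_on UNIV Psi"
    unfolding Psi_def
  proof (rule continuous_on_coordinatewise_then_product)
    fix g
    show "continuous_on UNIV (\<lambda>x::nat \<Rightarrow> nat. min 1 (x (idx g)))"
      by (rule continuous_on_compose2[of UNIV "\<lambda>n::nat. min 1 n" UNIV "\<lambda>x. x (idx g)"]) auto
  qed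
  have Psi_conf: "Psi x \<in> config {0,1}" for x by (auto simp: Psi_def config_def min_def)
  have Psim: "Psi \<in> measurable Pm (shift_space {0,1})"
    unfolding shift_space_def
  proof (rule measurable_restrict_space2)
    show "Psi \<in> space Pm \<rightarrow> config {0,1}" using Psi_conf by auto
    show "Psi \<in> borel_measurable Pm"
      using borel_measurable_continuous_onI[OF Psic] measurable_cong_sets[OF setsPm refl] by metis
  qed
  define \<mu> where "\<mu> = distr Pm (shift_space {0,1}) Psi"
  have Pmu: "prob_on {0,1} \<mu>" unfolding prob_on_def \<mu>_def using Pm.prob_space_distr[OF Psim] by simp
  have inv: "distr \<mu> (shift_space {0,1}) (shift_act h) = \<mu>" for h
  proof -
    define \<pi> where "\<pi> n = (if n \<in> range idx then idx (inv idx n + h) else n)" for n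
    have \<pi>idx: "\<pi> (idx g) = idx (g + h)" for g using inj by (simp add: \<pi>_def)
    have inj\<pi>: "inj \<pi>"
    proof (rule injI)
      fix a b assume e: "\<pi> a = \<pi> b"
      show "a = b"
      proof (cases "a \<in> range idx"; cases "b \<in> range idx")
        assume a: "a \<in> range idx" and b: "b \<in> range idx"
        then obtain x y where "a = idx x" "b = idx y" by blast
        with e show "a = b" using inj \<pi>idx by (metis add_right_cancel injD)
      next
        assume a: "a \<in> range idx" and b: "b \<notin> range idx"
        then show "a = b" using e by (auto simp: \<pi>_def)
      next
        assume a: "a \<notin> range idx" and b: "b \<in> range idx"
        then show "a = b" using e by (auto simp: \<pi>_def)
      next
        assume a: "a \<notin> range idx" and b: "b \<notin> range idx"
        then show "a = b" using e by (auto simp: \<pi>_def)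
      qed
    qed
    define R where "R x = (\<lambda>n. x (\<pi> n))" for x :: "nat \<Rightarrow> nat"
    have reidx: "distr Pm Pm R = Pm"
      using distr_PiM_reindex[of UNIV "\<lambda>_. B" \<pi> UNIV] probB inj\<pi>
      unfolding Pm_def R_def by (simp add: restrict_UNIV)
    have Rm: "R \<in> measurable Pm Pm"
      unfolding Pm_def R_def
      by (rule measurable_PiM_single'[where f="\<lambda>n x. x (\<pi> n)", simplified])
         (auto simp: space_PiM B_def)
    have comm: "shift_act h \<circ> Psi = Psi \<circ> R"
      by (auto simp: shift_act_def Psi_def R_def \<pi>idx)
    have "distr \<mu> (shift_space {0,1}) (shift_act h) = distr Pm (shift_space {0,1}) (shift_act h \<circ> Psi)"
      unfolding \<mu>_def by (rule distr_distr[OF meas_shift_act Psim])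
    also have "\<dots> = distr Pm (shift_space {0,1}) (Psi \<circ> R)" by (simp add: comm)
    also have "\<dots> = distr (distr Pm Pm R) (shift_space {0,1}) Psi"
      by (rule distr_distr[OF Psim Rm, symmetric])
    also have "\<dots> = \<mu>" by (simp add: reidx \<mu>_def)
    finally show ?thesis .
  qed
  have I: "invariant_measure {0,1} \<mu>" using Pmu inv by (simp add: invariant_measure_def)
  have Dm: "Dfun i j \<in> borel_measurable (shift_space {0,1})" by (rule meas_cont[OF Dfun_cont])
  have DPm: "(\<lambda>x. Dfun i j (Psi x)) \<in> borel_measurable Pm"
    using measurable_comp[OF Psim Dm] by (simp add: comp_def)
  define Z where "Z = prod_emb UNIV (\<lambda>_. B) {idx i, idx j} (\<Pi>\<^sub>E k\<in>{idx i, idx j}. if k = idx i then {0} else {1})"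
  have ij': "idx i \<noteq> idx j" using inj ij by (auto dest: injD)
  have Zs: "Z \<in> sets Pm" unfolding Z_def Pm_def by (rule sets_PiM_I) (auto simp: B_def)
  have "emeasure Pm Z = (\<Prod>k\<in>{idx i, idx j}. emeasure B (if k = idx i then {0} else {1}))"
    unfolding Z_def Pm_def by (rule emeasure_PiM_emb) (use probB in \<open>auto simp: B_def\<close>)
  also have "\<dots> = emeasure B {0} * emeasure B {1}" using ij' by simp
  also have "\<dots> = ennreal (1/2) * ennreal (1/2)"
    unfolding B_def by (simp add: emeasure_pmf_single)
  also have "ennreal (1/2) * ennreal (1/2) = ennreal (1/4)"
    by (subst ennreal_mult[symmetric]) auto
  finally have "emeasure Pm Z = ennreal (1/4)" .
  then have mZ: "measure Pm Z = 1/4" unfolding measure_def by simp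
  have Zpt: "Dfun i j (Psi x) = 1" if "x \<in> Z" for x
    using that ij' by (auto simp: Z_def prod_emb_def Dfun_def Psi_def PiE_iff)
  have "integral\<^sup>L Pm (indicator Z :: _ \<Rightarrow> real) \<le> integral\<^sup>L Pm (\<lambda>x. Dfun i j (Psi x))"
  proof (rule integral_mono)
    show "integrable Pm (indicator Z :: _ \<Rightarrow> real)" using Zs by (simp add: less_top[symmetric])
    show "integrable Pm (\<lambda>x. Dfun i j (Psi x))"
      by (rule Pm.integrable_const_bound[where B=1]) (use DPm in \<open>auto simp: Dfun_def\<close>)
    fix x show "indicator Z x \<le> Dfun i j (Psi x)"
      using Zpt[of x] by (cases "x \<in> Z") (auto simp: Dfun_def)
  qed
  moreover have "integral\<^sup>L Pm (indicator Z :: _ \<Rightarrow> real) = 1/4" using mZ Zs by simp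
  moreover have "integral\<^sup>L \<mu> (Dfun i j) = integral\<^sup>L Pm (\<lambda>x. Dfun i j (Psi x))"
    unfolding \<mu>_def by (rule integral_distr[OF Psim Dm])
  ultimately have "integral\<^sup>L \<mu> (Dfun i j) > 0" by simp
  then show ?thesis using I by blast
qed

lemma PA_RF:
  assumes PA: "PA TYPE('g::group_add)" and cnt: "countable (UNIV :: 'g set)" and g: "(g::'g) \<noteq> 0"
  shows "\<exists>K. normal_subgroup K \<and> finite (quot K) \<and> g \<notin> K"
proof -
  define idx where "idx = to_nat_on (UNIV :: 'g set)"
  have inj: "inj idx" unfolding idx_def using inj_on_to_nat_on[OF cnt] .
  obtain \<mu> :: "('g \<Rightarrow> nat) measure" where \<mu>: "invariant_measure {0,1} \<mu>" "integral\<^sup>L \<mu> (Dfun 0 g) > 0"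
    using bernoulli_exists[OF inj, of 0 g] g by auto
  have Dc: "{Dfun 0 g} \<subseteq> cont_funs {0,1}" using Dfun_cont by (auto simp: cont_funs_def)
  obtain \<nu> where \<nu>: "periodic_measure {0,1} \<nu>" "\<nu> \<in> weak_nbhd {0,1} \<mu> {Dfun 0 g} (integral\<^sup>L \<mu> (Dfun 0 g))"
    using PA \<mu> Dc unfolding PA_def by (metis finite.emptyI finite.insertI)
  have pos: "integral\<^sup>L \<nu> (Dfun 0 g) > 0" using \<nu>(2) by (auto simp: weak_nbhd_def)
  obtain Ob where Ob: "finite Ob" "Ob \<subseteq> config {0,1}" "\<forall>h \<omega>. \<omega> \<in> Ob \<longrightarrow> shift_act h \<omega> \<in> Ob"
    "measure \<nu> Ob = 1"
    using periodic_struct[OF \<nu>(1)] by blast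
  have Pn: "prob_on {0,1} \<nu>" using \<nu>(2) by (simp add: weak_nbhd_def)
  have "integral\<^sup>L \<nu> (Dfun 0 g) = (\<Sum>x\<in>Ob. Dfun 0 g x * measure \<nu> {x})"
    by (rule integral_fin_supp(2)[OF Pn Ob(1,2,4) meas_cont[OF Dfun_cont]])
  then obtain x where x: "x \<in> Ob" "x 0 \<noteq> x g"
    using pos by (metis (no_types, lifting) Dfun_def mult_eq_0_iff sum.neutral less_irrefl)
  show ?thesis
  proof (intro exI conjI)
    show "normal_subgroup (stab Ob)" by (rule stab_normal) (use Ob(3) in blast)
    show "finite (quot (stab Ob))" by (rule stab_finite_quot) (use Ob in blast)+
    show "g \<notin> stab Ob"
    proof
      assume "g \<in> stab Ob"
      then have "shift_act g x = x" using x(1) by (simp add: stab_def)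
      then have "shift_act g x 0 = x 0" by simp
      then show False using x(2) by (simp add: shift_act_def)
    qed
  qed
qed

lemma normal_UNIV: "normal_subgroup (UNIV :: 'g::group_add set)"
  by (simp add: normal_subgroup_def)

lemma quot_UNIV: "quot (UNIV :: 'g::group_add set) = {UNIV}"
proof -
  have "coset v (UNIV::'g set) = UNIV" for v
    using coset_mem[of _ v "UNIV::'g set"] by auto
  then show ?thesis unfolding quot_def by auto
qed

lemma EPA_PA: "EPA TYPE('g::group_add) \<Longrightarrow> PA TYPE('g)"
  unfolding EPA_def PA_def by blast

lemma core:
  fixes A :: "'a::discrete_topology set" and \<mu> :: "('g::group_add \<Rightarrow> 'a) measure"
  assumes fg: "finitely_generated TYPE('g)" and finA: "finite A" and I: "invariant_measure A \<mu>"
    and PA: "PA TYPE('g)"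
    and approx: "\<And>F \<epsilon>. finite F \<Longrightarrow> F \<subseteq> cont_funs A \<Longrightarrow> \<epsilon> > 0 \<Longrightarrow>
       \<exists>\<nu>. periodic_measure A \<nu> \<and> (E \<longrightarrow> ergodic_measure A \<nu>) \<and> \<nu> \<in> weak_nbhd A \<mu> F \<epsilon>"
  shows "rf_model A \<mu> \<and> (E \<longrightarrow> erf_model A \<mu>)"
proof -
  have cnt: "countable (UNIV :: 'g set)" by (rule fg_countable[OF fg])
  define e where "e = from_nat_into (UNIV :: 'g set)"
  have e: "range e = UNIV" unfolding e_def using cnt by simp
  have P: "prob_on A \<mu>" by (rule invD(1)[OF I])
  obtain \<nu>s where \<nu>s: "\<And>k. periodic_measure A (\<nu>s k) \<and> (E \<longrightarrow> ergodic_measure A (\<nu>s k))"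
    and conv: "\<And>F \<epsilon>. finite F \<Longrightarrow> F \<subseteq> cont_funs A \<Longrightarrow> \<epsilon> > 0 \<Longrightarrow>
            eventually (\<lambda>k. \<nu>s k \<in> weak_nbhd A \<mu> F \<epsilon>) sequentially"
    using approx_seq[OF e finA P, of "\<lambda>\<nu>. periodic_measure A \<nu> \<and> (E \<longrightarrow> ergodic_measure A \<nu>)"] approx
    by metis
  have "\<forall>k. \<exists>Ob. finite Ob \<and> Ob \<subseteq> config A \<and> (\<forall>h \<omega>. \<omega> \<in> Ob \<longrightarrow> shift_act h \<omega> \<in> Ob)
     \<and> measure (\<nu>s k) Ob = 1 \<and> (\<forall>\<omega>\<in>Ob. measure (\<nu>s k) {\<omega>} > 0)"
    using periodic_struct \<nu>s by blast
  then obtain Obs where Obs: "\<And>k. finite (Obs k) \<and> Obs k \<subseteq> config A \<and> (\<forall>h \<omega>. \<omega> \<in> Obs k \<longrightarrow> shift_act h \<omega> \<in> Obs k)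
     \<and> measure (\<nu>s k) (Obs k) = 1 \<and> (\<forall>\<omega>\<in>Obs k. measure (\<nu>s k) {\<omega>} > 0)" by metis
  have "\<forall>g::'g. \<exists>K. normal_subgroup K \<and> finite (quot K) \<and> (g \<noteq> 0 \<longrightarrow> g \<notin> K)"
  proof
    fix g :: 'g
    show "\<exists>K. normal_subgroup K \<and> finite (quot K) \<and> (g \<noteq> 0 \<longrightarrow> g \<notin> K)"
    proof (cases "g = 0")
      case True then show ?thesis by (intro exI[of _ "UNIV::'g set"]) (simp add: normal_UNIV quot_UNIV)
    next
      case False then show ?thesis using PA_RF[OF PA cnt False] by blast
    qed
  qed
  then obtain Kf where Kf: "\<And>g::'g. normal_subgroup (Kf g) \<and> finite (quot (Kf g)) \<and> (g \<noteq> 0 \<longrightarrow> g \<notin> Kf g)"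
    by metis
  define L where "L k = stab (Obs k) \<inter> Kf (e k)" for k
  have Ln: "normal_subgroup (L k) \<and> finite (quot (L k))" for k
  proof -
    have c: "\<And>h \<omega>. \<omega> \<in> Obs k \<Longrightarrow> shift_act h \<omega> \<in> Obs k" using Obs by blast
    show ?thesis unfolding L_def
      using normal_Int[OF stab_normal[OF c] conjunct1[OF Kf]]
        finite_quot_Int[OF stab_finite_quot[OF c] conjunct1[OF conjunct2[OF Kf]]] Obs by blast
  qed
  define \<Gamma> where "\<Gamma> = rec_nat (L 0) (\<lambda>n G. G \<inter> L (Suc n))"
  have \<Gamma>0: "\<Gamma> 0 = L 0" and \<Gamma>S: "\<Gamma> (Suc n) = \<Gamma> n \<inter> L (Suc n)" for n by (simp_all add: \<Gamma>_def)
  have \<Gamma>n: "normal_subgroup (\<Gamma> n) \<and> finite (quot (\<Gamma> n)) \<and> \<Gamma> n \<subseteq> L n" for n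
  proof (induction n)
    case 0 then show ?case using Ln \<Gamma>0 by simp
  next
    case (Suc n) then show ?case using Ln[of "Suc n"] normal_Int finite_quot_Int unfolding \<Gamma>S by blast
  qed
  have rf: "rf_approx \<Gamma>"
    unfolding rf_approx_def
  proof (intro conjI allI)
    fix n
    show "normal_subgroup (\<Gamma> n)" "finite (quot (\<Gamma> n))" using \<Gamma>n by blast+
    show "\<Gamma> (Suc n) \<subseteq> \<Gamma> n" unfolding \<Gamma>S by blast
  next
    show "(\<Inter>n. \<Gamma> n) = {0}"
    proof
      show "{0} \<subseteq> (\<Inter>n. \<Gamma> n)" using \<Gamma>n normalD(1) by blast
      show "(\<Inter>n. \<Gamma> n) \<subseteq> {0}"
      proof
        fix x assume x: "x \<in> (\<Inter>n. \<Gamma> n)"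
        show "x \<in> {0}"
        proof (rule ccontr)
          assume "x \<notin> {0}"
          then have x0: "x \<noteq> 0" by simp
          obtain k where k: "x = e k" using e by (metis UNIV_I image_iff)
          have "x \<in> \<Gamma> k" using x by blast
          then have "x \<in> Kf (e k)" using \<Gamma>n[of k] unfolding L_def by blast
          then show False using Kf[of "e k"] k x0 by blast
        qed
      qed
    qed
  qed
  have MS: "model_setup (\<Gamma> n) A (\<nu>s n) (Obs n)" for n
  proof
    show "normal_subgroup (\<Gamma> n)" "finite (quot (\<Gamma> n))" using \<Gamma>n by blast+
    show "finite A" by (rule finA)
    show "invariant_measure A (\<nu>s n)" using \<nu>s[of n] by (simp add: periodic_measure_def)
    show "finite (Obs n)" "Obs n \<subseteq> config A" "measure (\<nu>s n) (Obs n) = 1" using Obs by blast+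
    fix x assume "x \<in> Obs n"
    then show "fixH (\<Gamma> n) x"
      using fixH_mono[OF _ stab_fix] \<Gamma>n[of n] unfolding L_def by blast
  qed
  define \<mu>s where "\<mu>s n = distr (\<nu>s n) (fin_config_space (quot (\<Gamma> n)) A) (Phi (\<Gamma> n))" for n
  have ms: "model_seq A \<Gamma> \<mu>s"
    unfolding model_seq_def \<mu>s_def
    using model_setup.prob_M[OF MS] model_setup.model_inv[OF MS] by simp
  have cardpos: "card (quot (\<Gamma> n)) > 0" for n using \<Gamma>n quot_nonempty by (simp add: card_gt_0_iff)
  have rfconv: "(\<lambda>n. real (card {v \<in> quot (\<Gamma> n). distr (\<mu>s n) (shift_space A) (Pi_v v) \<in> weak_nbhd A \<mu> F \<epsilon>})
             / real (card (quot (\<Gamma> n)))) \<longlonglongrightarrow> 1"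
    if F: "finite F" "F \<subseteq> cont_funs A" "\<epsilon> > 0" for F \<epsilon>
  proof (rule tendsto_eventually)
    show "eventually (\<lambda>n. real (card {v \<in> quot (\<Gamma> n). distr (\<mu>s n) (shift_space A) (Pi_v v) \<in> weak_nbhd A \<mu> F \<epsilon>})
             / real (card (quot (\<Gamma> n))) = 1) sequentially"
      using conv[OF F]
    proof eventually_elim
      case (elim n)
      have "distr (\<mu>s n) (shift_space A) (Pi_v v) \<in> weak_nbhd A \<mu> F \<epsilon>" if v: "v \<in> quot (\<Gamma> n)" for v
      proof -
        have "integral\<^sup>L (distr (\<mu>s n) (shift_space A) (Pi_v v)) f = integral\<^sup>L (\<nu>s n) f" if "f \<in> F" for f
          unfolding \<mu>s_def
          by (rule model_setup.model_integral[OF MS v meas_cont]) (use that F(2) in \<open>auto simp: cont_funs_def\<close>)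
        moreover have "prob_on A (distr (\<mu>s n) (shift_space A) (Pi_v v))"
          unfolding \<mu>s_def by (rule model_setup.model_prob_on[OF MS v])
        ultimately show ?thesis using elim by (auto simp: weak_nbhd_def)
      qed
      then have "{v \<in> quot (\<Gamma> n). distr (\<mu>s n) (shift_space A) (Pi_v v) \<in> weak_nbhd A \<mu> F \<epsilon>} = quot (\<Gamma> n)"
        by blast
      then show ?case using cardpos[of n] by simp
    qed
  qed
  have rfm: "rf_model A \<mu>" unfolding rf_model_def using rf ms rfconv by blast
  have erfm: "erf_model A \<mu>" if E: E
  proof -
    have measconv: "(\<lambda>n. measure (\<mu>s n) {\<rho> \<in> space (\<mu>s n). empirical A (quot (\<Gamma> n)) \<rho> \<in> weak_nbhd A \<mu> F \<epsilon>}) \<longlonglongrightarrow> 1"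
      if F: "finite F" "F \<subseteq> cont_funs A" "\<epsilon> > 0" for F \<epsilon>
    proof (rule tendsto_eventually)
      show "eventually (\<lambda>n. measure (\<mu>s n) {\<rho> \<in> space (\<mu>s n). empirical A (quot (\<Gamma> n)) \<rho> \<in> weak_nbhd A \<mu> F \<epsilon>} = 1) sequentially"
        using conv[OF F]
      proof eventually_elim
        case (elim n)
        have erg: "ergodic_measure A (\<nu>s n)" using \<nu>s E by blast
        have Pn: "prob_on A (\<nu>s n)" using elim by (simp add: weak_nbhd_def)
        interpret pn: prob_space "\<nu>s n" using prob_onD(1)[OF Pn] .
        have clos: "\<And>h y. y \<in> Obs n \<Longrightarrow> shift_act h y \<in> Obs n" using Obs by blast
        have good: "empirical A (quot (\<Gamma> n)) (Phi (\<Gamma> n) x) \<in> weak_nbhd A \<mu> F \<epsilon>" if x: "x \<in> Obs n" for x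
        proof -
          have orb: "measure (\<nu>s n) (range (\<lambda>h. shift_act h x)) = 1"
            by (rule orbit_full[OF erg x _ clos]) (use Obs x in blast)+
          have "integral\<^sup>L (empirical A (quot (\<Gamma> n)) (Phi (\<Gamma> n) x)) f = integral\<^sup>L (\<nu>s n) f" if fF: "f \<in> F" for f
          proof -
            have fm: "f \<in> borel_measurable (shift_space A)"
              using fF F(2) by (intro meas_cont) (auto simp: cont_funs_def)
            show ?thesis
              using model_setup.empirical_integral(1)[OF MS x fm] model_setup.erf_integral[OF MS x clos orb fm]
              by simp
          qed
          moreover have "prob_on A (empirical A (quot (\<Gamma> n)) (Phi (\<Gamma> n) x))"
            by (rule model_setup.empirical_integral(2)[OF MS x meas_cont[OF continuous_on_const]])
          ultimately show ?thesis using elim by (auto simp: weak_nbhd_def)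
        qed
        define X where "X = {\<rho> \<in> space (\<mu>s n). empirical A (quot (\<Gamma> n)) \<rho> \<in> weak_nbhd A \<mu> F \<epsilon>}"
        have spm: "space (\<mu>s n) = quot (\<Gamma> n) \<rightarrow>\<^sub>E A" by (simp add: \<mu>s_def fin_config_space_def)
        have Xs: "X \<in> sets (fin_config_space (quot (\<Gamma> n)) A)"
          unfolding X_def fin_config_space_def using spm by auto
        have PhiM: "Phi (\<Gamma> n) \<in> measurable (\<nu>s n) (fin_config_space (quot (\<Gamma> n)) A)"
          by (rule model_setup.PhiM[OF MS])
        have "measure (\<mu>s n) X = measure (\<nu>s n) (Phi (\<Gamma> n) -` X \<inter> space (\<nu>s n))"
          unfolding \<mu>s_def by (rule measure_distr[OF PhiM Xs])
        moreover have "Obs n \<subseteq> Phi (\<Gamma> n) -` X \<inter> space (\<nu>s n)"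
        proof
          fix x assume x: "x \<in> Obs n"
          have xc: "x \<in> config A" using x Obs by blast
          have "Phi (\<Gamma> n) x \<in> quot (\<Gamma> n) \<rightarrow>\<^sub>E A" by (rule Phi_space[OF xc])
          then show "x \<in> Phi (\<Gamma> n) -` X \<inter> space (\<nu>s n)"
            using good[OF x] xc prob_onD(3)[OF Pn] unfolding X_def spm by auto
        qed
        moreover have "Phi (\<Gamma> n) -` X \<inter> space (\<nu>s n) \<in> sets (\<nu>s n)"
          by (rule measurable_sets[OF PhiM Xs])
        ultimately have "measure (\<mu>s n) X \<ge> measure (\<nu>s n) (Obs n)"
          using pn.finite_measure_mono by metis
        moreover have "measure (\<mu>s n) X \<le> 1"
        proof -
          have "prob_space (\<mu>s n)" unfolding \<mu>s_def by (rule model_setup.prob_M[OF MS])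
          then show ?thesis by (rule prob_space.prob_le_1)
        qed
        moreover have "measure (\<nu>s n) (Obs n) = 1" using Obs by blast
        ultimately have "measure (\<mu>s n) X = 1" by linarith
        then show ?case unfolding X_def .
      qed
    qed
    show ?thesis unfolding erf_model_def using rf ms rfconv measconv by blast
  qed
  show ?thesis using rfm erfm by blast
qed

theorem mainTheorem10:
  fixes A :: "'a::discrete_topology set" and \<mu> :: "('g::group_add \<Rightarrow> 'a) measure"
  assumes "finitely_generated TYPE('g)"
    and "finite A"
    and "invariant_measure A \<mu>"
  shows "(PA TYPE('g) \<longrightarrow> rf_model A \<mu>) \<and> (EPA TYPE('g) \<longrightarrow> erf_model A \<mu>)"
proof (intro conjI impI)
  assume PA: "PA TYPE('g)"
  have "rf_model A \<mu> \<and> (False \<longrightarrow> erf_model A \<mu>)"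
  proof (rule core[OF assms PA])
    fix F :: "(('g \<Rightarrow> 'a) \<Rightarrow> real) set" and \<epsilon> :: real
    assume F: "finite F" "F \<subseteq> cont_funs A" "\<epsilon> > 0"
    show "\<exists>\<nu>. periodic_measure A \<nu> \<and> (False \<longrightarrow> ergodic_measure A \<nu>) \<and> \<nu> \<in> weak_nbhd A \<mu> F \<epsilon>"
      by (rule transfer_approx[OF assms(2,3) F]) (use PA in \<open>auto simp: PA_def\<close>)
  qed
  then show "rf_model A \<mu>" by blast
next
  assume EPA: "EPA TYPE('g)"
  have "rf_model A \<mu> \<and> (True \<longrightarrow> erf_model A \<mu>)"
  proof (rule core[OF assms EPA_PA[OF EPA]])
    fix F :: "(('g \<Rightarrow> 'a) \<Rightarrow> real) set" and \<epsilon> :: real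
    assume F: "finite F" "F \<subseteq> cont_funs A" "\<epsilon> > 0"
    show "\<exists>\<nu>. periodic_measure A \<nu> \<and> (True \<longrightarrow> ergodic_measure A \<nu>) \<and> \<nu> \<in> weak_nbhd A \<mu> F \<epsilon>"
      by (rule transfer_approx[OF assms(2,3) F]) (use EPA in \<open>auto simp: EPA_def\<close>)
  qed
  then show "erf_model A \<mu>" by blast
qed

end
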